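(* Every $\mathbb{C}$-algebra $R(A,P_0)$ obtained from data $(A,P_0)$ as described in the context is isomorphic as a $\mathbb{C}$-algebra (forgetting the $K_0$-grading) to a product $$\bigotimes_{i=1}^t R(A^{(i)},P_0^{(i)}) \otimes \mathbb{C}[S_1,\ldots,S_{m'}],$$ where the algebras $R(A^{(i)},P_0^{(i)})$ (each obtained by the same construction from data $(A^{(i)},P_0^{(i)})$) are indecomposable with $m^{(i)} = 0$ for all $i=1,\ldots,t$, and $m'\geq m$ holds.
   Context: Fix integers $r \geq c > 0$, $n_0,\ldots,n_r>0$ and $m\geq 0$, and set $n:=n_0+\ldots+n_r$. Let $A=(a_0,\ldots,a_r)$ be a $(c+1)\times(r+1)$ complex matrix of full rank with pairwise linearly independent columns $a_i$, and let $P_0$ be the $r\times(n+m)$ matrix built from tuples $l_i=(l_{i1},\ldots,l_{in_i})$ of positive integers, $$P_0=\left[\begin{array}{ccccccc} -l_0&l_1&&&0&\ldots&0\\ \vdots&&\ddots&&\vdots&&\vdots\\ -l_0&&&l_r&0&\ldots&0\end{array}\right].$$ In the polynomial ring $\mathbb{C}[T_{ij},S_k]$ ($i=0,\ldots,r$, $j=1,\ldots,n_i$, $k=1,\ldots,m$) set $T_i^{l_i}:=T_{i1}^{l_{i1}}\cdots T_{in_i}^{l_{in_i}}$ and, for $v\in\mathbb{C}^{r+1}$, $g_v:=v_0T_0^{l_0}+\ldots+v_rT_r^{l_r}$. Define $R(A,P_0):=\mathbb{C}[T_{ij},S_k]/\langle g_v;\ v\in\ker(A)\rangle$, graded by $K_0:=\mathbb{Z}^{n+m}/\mathrm{im}(P_0^*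 )$ via $\deg(T_{ij})$, $\deg(S_k)$ the images of the canonical basis vectors. The matrix $A$ is called indecomposable if for any subset $I$ of the column indices one has $\{0\}\neq \mathrm{Lin}(a_i;\ i\in I)\cap\mathrm{Lin}(a_j;\ j\notin I)$; the ring $R(A,P_0)$ is called indecomposable if $A$ is indecomposable and $l_{ij}n_i>1$ holds for all $i$ (and $j$). Here $m^{(i)}$ denotes the number of variables $S_k$ in the data for $R(A^{(i)},P_0^{(i)})$. *)

theory Defs
  imports "HOL-Library.Poly_Mapping" "HOL-Algebra.QuotRing" "HOL-Algebra.RingHom"
    "Jordan_Normal_Form.DL_Rank" "Jordan_Normal_Form.Matrix_Kernel"
begin

datatype var = T nat nat | S nat

type_synonym 'v cpoly = "('v \<Rightarrow>\<^sub>0 nat) \<Rightarrow>\<^sub>0 complex"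

definition poly_ring :: "'v set \<Rightarrow> 'v cpoly ring" where
  "poly_ring V = \<lparr> carrier = {p. \<forall>\<mu> \<in> Poly_Mapping.keys p. Poly_Mapping.keys \<mu> \<subseteq> V},
                   monoid.mult = (*), one = 1, zero = 0, add = (+) \<rparr>"

definition const_poly :: "complex \<Rightarrow> 'v cpoly" where
  "const_poly c = Poly_Mapping.single 0 c"

text \<open>Data: a complex matrix A (c+1 rows, r+1 columns), the numbers n_0..n_r given by ns,
  the exponents l_ij given by l, and m. The matrix P_0 is determined by l, ns, r and m.\<close>

definition data_r :: "complex mat \<Rightarrow> nat" where "data_r A = dim_col A - 1"
definition data_c :: "complex mat \<Rightarrow> nat" where "data_c A = dim_row A - 1"

definition pairwise_lin_indep_cols :: "complex mat \<Rightarrow> bool" where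
  "pairwise_lin_indep_cols A \<longleftrightarrow>
     (\<forall>i < dim_col A. \<forall>j < dim_col A. i \<noteq> j \<longrightarrow>
        (\<forall>a b :: complex. a \<cdot>\<^sub>v col A i + b \<cdot>\<^sub>v col A j = 0\<^sub>v (dim_row A) \<longrightarrow> a = 0 \<and> b = 0))"

definition valid_data :: "complex mat \<Rightarrow> (nat \<Rightarrow> nat) \<Rightarrow> (nat \<Rightarrow> nat \<Rightarrow> nat) \<Rightarrow> nat \<Rightarrow> bool" where
  "valid_data A ns l m \<longleftrightarrow>
     dim_row A \<ge> 1 \<and> dim_col A \<ge> 1 \<and>
     data_r A \<ge> data_c A \<and> data_c A > 0 \<and>
     (\<forall>i \<le> data_r A. ns i > 0) \<and>
     (\<forall>i \<le> data_r A. \<forall>j \<in> {1..ns i}. l i j > 0) \<and>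
     vec_space.rank (dim_row A) A = dim_row A \<and>
     pairwise_lin_indep_cols A"

definition data_vars :: "complex mat \<Rightarrow> (nat \<Rightarrow> nat) \<Rightarrow> nat \<Rightarrow> var set" where
  "data_vars A ns m = {T i j | i j. i \<le> data_r A \<and> j \<in> {1..ns i}} \<union> {S k | k. k \<in> {1..m}}"

definition mono_T :: "(var \<Rightarrow> 'v) \<Rightarrow> (nat \<Rightarrow> nat) \<Rightarrow> (nat \<Rightarrow> nat \<Rightarrow> nat) \<Rightarrow> nat \<Rightarrow> 'v \<Rightarrow>\<^sub>0 nat" where
  "mono_T emb ns l i = (\<Sum>j\<in>{1..ns i}. Poly_Mapping.single (emb (T i j)) (l i j))"

definition g_poly :: "(var \<Rightarrow> 'v) \<Rightarrow> complex mat \<Rightarrow> (nat \<Rightarrow> nat) \<Rightarrow> (nat \<Rightarrow> nat \<Rightarrow> nat)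
    \<Rightarrow> complex vec \<Rightarrow> 'v cpoly" where
  "g_poly emb A ns l v = (\<Sum>i \<le> data_r A. Poly_Mapping.single (mono_T emb ns l i) (v $ i))"

definition relations :: "(var \<Rightarrow> 'v) \<Rightarrow> complex mat \<Rightarrow> (nat \<Rightarrow> nat) \<Rightarrow> (nat \<Rightarrow> nat \<Rightarrow> nat)
    \<Rightarrow> 'v cpoly set" where
  "relations emb A ns l = {g_poly emb A ns l v | v. v \<in> mat_kernel A}"

text \<open>R(A,P_0) = C[T_ij, S_k] / < g_v ; v \<in> ker A > (as a ring; the C-structure is
  given by the classes of constant polynomials).\<close>
definition R_ring :: "complex mat \<Rightarrow> (nat \<Rightarrow> nat) \<Rightarrow> (nat \<Rightarrow> nat \<Rightarrow> nat) \<Rightarrow> nat \<Rightarrow> var cpoly set ring" where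
  "R_ring A ns l m =
     poly_ring (data_vars A ns m) Quot genideal (poly_ring (data_vars A ns m)) (relations id A ns l)"

definition col_span :: "complex mat \<Rightarrow> nat set \<Rightarrow> complex vec set" where
  "col_span A I = LinearCombinations.module.span class_ring (module_vec TYPE(complex) (dim_row A)) (col A ` I)"

definition indecomposable_mat :: "complex mat \<Rightarrow> bool" where
  "indecomposable_mat A \<longleftrightarrow>
     (\<forall>I. I \<noteq> {} \<and> I \<subset> {0..<dim_col A} \<longrightarrow>
        col_span A I \<inter> col_span A ({0..<dim_col A} - I) \<noteq> {0\<^sub>v (dim_row A)})"

definition indecomposable_data :: "complex mat \<Rightarrow> (nat \<Rightarrow> nat) \<Rightarrow> (nat \<Rightarrow> nat \<Rightarrow> nat) \<Rightarrow> bool" where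
  "indecomposable_data A ns l \<longleftrightarrow>
     indecomposable_mat A \<and> (\<forall>i \<le> data_r A. \<forall>j \<in> {1..ns i}. l i j * ns i > 1)"

text \<open>The tensor product R(A^(1),P_0^(1)) \<otimes> ... \<otimes> R(A^(t),P_0^(t)) \<otimes> C[S_1..S_m'],
  realized (as usual for quotients of polynomial rings in disjoint sets of variables) as the
  polynomial ring in the disjoint union of all variables, the variable x of factor i being
  (i, x) and the free variable S_k being (0, S k), modulo the ideal generated by all relations
  g_v^(i) of all factors.\<close>
definition tensor_vars :: "nat \<Rightarrow> (nat \<Rightarrow> complex mat) \<Rightarrow> (nat \<Rightarrow> nat \<Rightarrow> nat) \<Rightarrow> (nat \<Rightarrow> nat)
    \<Rightarrow> nat \<Rightarrow> (nat \<times> var) set" where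
  "tensor_vars t As nss ms m' =
     (\<Union>i\<in>{1..t}. Pair i ` data_vars (As i) (nss i) (ms i)) \<union> {(0, S k) | k. k \<in> {1..m'}}"

definition tensor_ring :: "nat \<Rightarrow> (nat \<Rightarrow> complex mat) \<Rightarrow> (nat \<Rightarrow> nat \<Rightarrow> nat) \<Rightarrow> (nat \<Rightarrow> nat \<Rightarrow> nat \<Rightarrow> nat)
    \<Rightarrow> (nat \<Rightarrow> nat) \<Rightarrow> nat \<Rightarrow> (nat \<times> var) cpoly set ring" where
  "tensor_ring t As nss ls ms m' =
     poly_ring (tensor_vars t As nss ms m') Quot
       genideal (poly_ring (tensor_vars t As nss ms m'))
         (\<Union>i\<in>{1..t}. relations (Pair i) (As i) (nss i) (ls i))"

definition calg_iso_quot :: "'a cpoly set ring \<Rightarrow> 'b cpoly set ring \<Rightarrow> bool" where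
  "calg_iso_quot R1 R2 \<longleftrightarrow>
     (\<exists>h \<in> ring_iso R1 R2. \<forall>c. \<forall>X \<in> carrier R1. const_poly c \<in> X \<longrightarrow>
         const_poly c \<in> h X)"

end

theory Submission
  imports Defs
begin


section \<open>Substitution homomorphisms\<close>

definition Var :: "'v \<Rightarrow> 'v cpoly" where
  "Var x = Poly_Mapping.single (Poly_Mapping.single x 1) 1"

definition mon :: "('v \<Rightarrow> 'w cpoly) \<Rightarrow> ('v \<Rightarrow>\<^sub>0 nat) \<Rightarrow> 'w cpoly" where
  "mon \<sigma> \<mu> = (\<Prod>x\<in>Poly_Mapping.keys \<mu>. \<sigma> x ^ Poly_Mapping.lookup \<mu> x)"

definition subst :: "('v \<Rightarrow> 'w cpoly) \<Rightarrow> 'v cpoly \<Rightarrow> 'w cpoly" where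
  "subst \<sigma> p = (\<Sum>\<mu>\<in>Poly_Mapping.keys p. Poly_Mapping.single 0 (Poly_Mapping.lookup p \<mu>) * mon \<sigma> \<mu>)"

lemma mon_superset:
  assumes "finite Ss" "Poly_Mapping.keys \<mu> \<subseteq> Ss"
  shows "mon \<sigma> \<mu> = (\<Prod>x\<in>Ss. \<sigma> x ^ Poly_Mapping.lookup \<mu> x)"
  unfolding mon_def
  by (rule prod.mono_neutral_left) (use assms in \<open>auto simp: in_keys_iff\<close>)

lemma mon_zero [simp]: "mon \<sigma> 0 = 1"
  by (simp add: mon_def)

lemma mon_add: "mon \<sigma> (\<mu> + \<nu>) = mon \<sigma> \<mu> * mon \<sigma> \<nu>"
proof -
  let ?S = "Poly_Mapping.keys \<mu> \<union> Poly_Mapping.keys \<nu>"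
  have "mon \<sigma> (\<mu> + \<nu>) = (\<Prod>x\<in>?S. \<sigma> x ^ Poly_Mapping.lookup (\<mu> + \<nu>) x)"
    by (rule mon_superset) (auto dest: keys_add[THEN subsetD])
  also have "\<dots> = (\<Prod>x\<in>?S. \<sigma> x ^ Poly_Mapping.lookup \<mu> x * \<sigma> x ^ Poly_Mapping.lookup \<nu> x)"
    by (simp add: lookup_add power_add)
  also have "\<dots> = mon \<sigma> \<mu> * mon \<sigma> \<nu>"
    by (simp add: prod.distrib mon_superset[of ?S])
  finally show ?thesis .
qed

lemma mon_single [simp]: "mon \<sigma> (Poly_Mapping.single x e) = \<sigma> x ^ e"
  by (cases "e = 0") (simp_all add: mon_def)

lemma mon_sum: "mon \<sigma> (\<Sum>a\<in>A. f a) = (\<Prod>a\<in>A. mon \<sigma> (f a))"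
  by (induction A rule: infinite_finite_induct) (simp_all add: mon_add)

lemma subst_superset:
  assumes "finite Ss" "Poly_Mapping.keys p \<subseteq> Ss"
  shows "subst \<sigma> p = (\<Sum>\<mu>\<in>Ss. Poly_Mapping.single 0 (Poly_Mapping.lookup p \<mu>) * mon \<sigma> \<mu>)"
  unfolding subst_def
  by (rule sum.mono_neutral_left) (use assms in \<open>auto simp: in_keys_iff\<close>)

lemma subst_zero [simp]: "subst \<sigma> 0 = 0"
  by (simp add: subst_def)

lemma subst_add: "subst \<sigma> (p + q) = subst \<sigma> p + subst \<sigma> q"
proof -
  let ?S = "Poly_Mapping.keys p \<union> Poly_Mapping.keys q"
  have "subst \<sigma> (p + q) = (\<Sum>\<mu>\<in>?S. Poly_Mapping.single 0 (Poly_Mapping.lookup (p + q) \<mu>) * mon \<sigma> \<mu>)"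
    by (rule subst_superset) (auto dest: keys_add[THEN subsetD])
  also have "\<dots> = (\<Sum>\<mu>\<in>?S. Poly_Mapping.single 0 (Poly_Mapping.lookup p \<mu>) * mon \<sigma> \<mu>
      + Poly_Mapping.single 0 (Poly_Mapping.lookup q \<mu>) * mon \<sigma> \<mu>)"
    by (simp add: lookup_add single_add distrib_right)
  also have "\<dots> = subst \<sigma> p + subst \<sigma> q"
    by (simp add: sum.distrib subst_superset[of ?S])
  finally show ?thesis .
qed

lemma subst_sum: "subst \<sigma> (\<Sum>a\<in>A. f a) = (\<Sum>a\<in>A. subst \<sigma> (f a))"
  by (induction A rule: infinite_finite_induct) (simp_all add: subst_add)

lemma subst_uminus: "subst \<sigma> (- p) = - subst \<sigma> p"
proof -
  have "subst \<sigma> p + subst \<sigma> (-p) = 0" using subst_add[of \<sigma> p "-p"] by simp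
  then show ?thesis by (metis add.inverse_unique)
qed

lemma subst_diff: "subst \<sigma> (p - q) = subst \<sigma> p - subst \<sigma> q"
  using subst_add[of \<sigma> p "-q"] by (simp add: subst_uminus)

lemma subst_single: "subst \<sigma> (Poly_Mapping.single \<mu> c) = Poly_Mapping.single 0 c * mon \<sigma> \<mu>"
  by (cases "c = 0") (simp_all add: subst_def)

lemma poly_expand:
  fixes p :: "'a \<Rightarrow>\<^sub>0 'b::comm_monoid_add"
  shows "p = (\<Sum>\<mu>\<in>Poly_Mapping.keys p. Poly_Mapping.single \<mu> (Poly_Mapping.lookup p \<mu>))"
proof (rule poly_mapping_eqI)
  fix k
  show "Poly_Mapping.lookup p k = Poly_Mapping.lookup (\<Sum>\<mu>\<in>Poly_Mapping.keys p. Poly_Mapping.single \<mu> (Poly_Mapping.lookup p \<mu>)) k"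
    by (cases "k \<in> Poly_Mapping.keys p")
       (simp_all add: lookup_sum lookup_single when_def in_keys_iff sum.delta)
qed

lemma subst_mult: "subst \<sigma> (p * q) = subst \<sigma> p * subst \<sigma> q"
proof -
  let ?P = "Poly_Mapping.keys p" and ?Q = "Poly_Mapping.keys q"
  have "p * q = (\<Sum>\<mu>\<in>?P. Poly_Mapping.single \<mu> (Poly_Mapping.lookup p \<mu>)) *
      (\<Sum>\<nu>\<in>?Q. Poly_Mapping.single \<nu> (Poly_Mapping.lookup q \<nu>))"
    using poly_expand[of p, symmetric] poly_expand[of q, symmetric] by simp
  also have "\<dots> = (\<Sum>\<mu>\<in>?P. \<Sum>\<nu>\<in>?Q. Poly_Mapping.single (\<mu> + \<nu>) (Poly_Mapping.lookup p \<mu> * Poly_Mapping.lookup q \<nu>))"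
    by (simp add: sum_distrib_left sum_distrib_right mult_single) (rule sum.swap)
  finally have pq: "p * q = \<dots>" .
  have "subst \<sigma> (p * q) = (\<Sum>\<mu>\<in>?P. \<Sum>\<nu>\<in>?Q. (Poly_Mapping.single 0 (Poly_Mapping.lookup p \<mu>) * mon \<sigma> \<mu>) *
      (Poly_Mapping.single 0 (Poly_Mapping.lookup q \<nu>) * mon \<sigma> \<nu>))"
    unfolding pq subst_sum subst_single mon_add
    by (intro sum.cong refl) (simp add: mult_single algebra_simps)
  also have "\<dots> = subst \<sigma> p * subst \<sigma> q"
    unfolding subst_def by (rule sum_product[symmetric])
  finally show ?thesis .
qed

lemma subst_const [simp]: "subst \<sigma> (Poly_Mapping.single 0 c) = Poly_Mapping.single 0 c"
  by (simp add: subst_single)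

lemma subst_one [simp]: "subst \<sigma> 1 = 1"
  using subst_const[of \<sigma> 1] by simp

lemma subst_Var [simp]: "subst \<sigma> (Var x) = \<sigma> x"
  by (simp add: Var_def subst_single)

lemma subst_prod: "subst \<sigma> (\<Prod>a\<in>A. f a) = (\<Prod>a\<in>A. subst \<sigma> (f a))"
  by (induction A rule: infinite_finite_induct) (simp_all add: subst_mult)

lemma subst_power: "subst \<sigma> (p ^ n) = subst \<sigma> p ^ n"
  by (induction n) (simp_all add: subst_mult)

lemma subst_mon: "subst \<sigma> (mon \<tau> \<mu>) = mon (\<lambda>x. subst \<sigma> (\<tau> x)) \<mu>"
  by (simp add: mon_def subst_prod subst_power)

lemma subst_comp: "subst \<sigma> (subst \<tau> p) = subst (\<lambda>x. subst \<sigma> (\<tau> x)) p"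
  by (simp only: subst_def[of \<tau>] subst_def[of "\<lambda>x. subst \<sigma> (\<tau> x)"] subst_sum subst_mult subst_const subst_mon)

lemma Var_power: "Var x ^ e = Poly_Mapping.single (Poly_Mapping.single x e) 1"
  by (induction e) (simp_all add: Var_def mult_single single_add[symmetric])

lemma prod_single_one:
  "(\<Prod>a\<in>A. Poly_Mapping.single (f a) (1::'b::comm_semiring_1)) = Poly_Mapping.single (\<Sum>a\<in>A. f a) 1"
  by (induction A rule: infinite_finite_induct) (simp_all add: mult_single)

lemma mon_Var: "mon Var \<mu> = Poly_Mapping.single \<mu> 1"
proof -
  have e: "(\<Sum>x\<in>Poly_Mapping.keys \<mu>. Poly_Mapping.single x (Poly_Mapping.lookup \<mu> x)) = \<mu>"
    by (rule poly_expand[symmetric])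
  have "mon Var (\<Sum>x\<in>Poly_Mapping.keys \<mu>. Poly_Mapping.single x (Poly_Mapping.lookup \<mu> x)) =
     Poly_Mapping.single (\<Sum>x\<in>Poly_Mapping.keys \<mu>. Poly_Mapping.single x (Poly_Mapping.lookup \<mu> x)) 1"
    by (simp add: mon_sum Var_power prod_single_one)
  then show ?thesis by (simp only: e)
qed

lemma subst_Var_id [simp]: "subst Var p = p"
proof -
  have "subst Var p = (\<Sum>\<mu>\<in>Poly_Mapping.keys p. Poly_Mapping.single \<mu> (Poly_Mapping.lookup p \<mu>))"
    unfolding subst_def mon_Var by (simp add: mult_single)
  then show ?thesis using poly_expand[of p, symmetric] by simp
qed

lemma mon_rename:
  "mon (\<lambda>y. Var (\<rho> y)) (\<Sum>a\<in>A. Poly_Mapping.single (f a) (e a)) =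
   Poly_Mapping.single (\<Sum>a\<in>A. Poly_Mapping.single (\<rho> (f a)) (e a)) 1"
  by (simp add: mon_sum Var_power prod_single_one)

lemma subst_rename:
  "subst (\<lambda>y. Var (\<rho> y)) (Poly_Mapping.single (\<Sum>a\<in>A. Poly_Mapping.single (f a) (e a)) c) =
   Poly_Mapping.single (\<Sum>a\<in>A. Poly_Mapping.single (\<rho> (f a)) (e a)) c"
  by (simp add: subst_single mon_rename mult_single)

lemma mon_cong: "(\<And>x. x \<in> Poly_Mapping.keys \<mu> \<Longrightarrow> \<sigma> x = \<sigma>' x) \<Longrightarrow> mon \<sigma> \<mu> = mon \<sigma>' \<mu>"
  unfolding mon_def by (rule prod.cong) auto

lemma subst_cong:
  "(\<And>\<mu> x. \<mu> \<in> Poly_Mapping.keys p \<Longrightarrow> x \<in> Poly_Mapping.keys \<mu> \<Longrightarrow> \<sigma> x = \<sigma>' x) \<Longrightarrow> subst \<sigma> p = subst \<sigma>' p"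
  unfolding subst_def by (rule sum.cong, simp, metis mon_cong)

section \<open>The polynomial ring as a ring\<close>

definition pcar :: "'v set \<Rightarrow> 'v cpoly set" where
  "pcar V = {p. \<forall>\<mu> \<in> Poly_Mapping.keys p. Poly_Mapping.keys \<mu> \<subseteq> V}"

lemma carrier_poly_ring [simp]: "carrier (poly_ring V) = pcar V"
  by (simp add: poly_ring_def pcar_def)

lemma poly_ring_ops [simp]:
  "mult (poly_ring V) = (*)" "add (poly_ring V) = (+)" "one (poly_ring V) = 1" "zero (poly_ring V) = 0"
  by (simp_all add: poly_ring_def)

lemma pcar_add: assumes "p \<in> pcar V" "q \<in> pcar V" shows "p + q \<in> pcar V"
  unfolding pcar_def
proof (rule CollectI, rule ballI)
  fix \<mu> assume "\<mu> \<in> Poly_Mapping.keys (p + q)"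
  then have "\<mu> \<in> Poly_Mapping.keys p \<or> \<mu> \<in> Poly_Mapping.keys q" using keys_add[of p q] by blast
  then show "Poly_Mapping.keys \<mu> \<subseteq> V" using assms by (auto simp: pcar_def)
qed

lemma pcar_zero [simp]: "0 \<in> pcar V"
  by (simp add: pcar_def)

lemma pcar_uminus: "p \<in> pcar V \<Longrightarrow> - p \<in> pcar V"
  unfolding pcar_def by (simp add: in_keys_iff)

lemma pcar_diff: "p \<in> pcar V \<Longrightarrow> q \<in> pcar V \<Longrightarrow> p - q \<in> pcar V"
  using pcar_add[of p V "-q"] pcar_uminus[of q V] by simp

lemma pcar_single: "Poly_Mapping.keys \<mu> \<subseteq> V \<Longrightarrow> Poly_Mapping.single \<mu> c \<in> pcar V"
  unfolding pcar_def by simp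

lemma pcar_one [simp]: "1 \<in> pcar V"
  using pcar_single[of 0 V 1] by simp

lemma pcar_const [simp]: "Poly_Mapping.single 0 c \<in> pcar V"
  by (rule pcar_single) simp

lemma pcar_mult: assumes "p \<in> pcar V" "q \<in> pcar V" shows "p * q \<in> pcar V"
  unfolding pcar_def
proof (rule CollectI, rule ballI)
  fix \<mu> assume "\<mu> \<in> Poly_Mapping.keys (p * q)"
  then obtain a b where ab: "\<mu> = a + b" "a \<in> Poly_Mapping.keys p" "b \<in> Poly_Mapping.keys q"
    using keys_mult[of p q] by blast
  have "Poly_Mapping.keys a \<subseteq> V" "Poly_Mapping.keys b \<subseteq> V"
    using ab assms by (auto simp: pcar_def)
  then show "Poly_Mapping.keys \<mu> \<subseteq> V" using keys_add[of a b] ab(1) by blast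
qed

lemma pcar_sum: "(\<And>a. a \<in> A \<Longrightarrow> f a \<in> pcar V) \<Longrightarrow> (\<Sum>a\<in>A. f a) \<in> pcar V"
  by (induction A rule: infinite_finite_induct) (simp_all add: pcar_add)

lemma pcar_prod: "(\<And>a. a \<in> A \<Longrightarrow> f a \<in> pcar V) \<Longrightarrow> (\<Prod>a\<in>A. f a) \<in> pcar V"
  by (induction A rule: infinite_finite_induct) (simp_all add: pcar_mult)

lemma pcar_power: "p \<in> pcar V \<Longrightarrow> p ^ n \<in> pcar V"
  by (induction n) (simp_all add: pcar_mult)

lemma pcar_Var: "x \<in> V \<Longrightarrow> Var x \<in> pcar V"
  unfolding Var_def by (rule pcar_single) simp

lemma pcar_mon: "(\<And>x. x \<in> Poly_Mapping.keys \<mu> \<Longrightarrow> \<sigma> x \<in> pcar W) \<Longrightarrow> mon \<sigma> \<mu> \<in> pcar W"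
  unfolding mon_def by (intro pcar_prod pcar_power) auto

lemma pcar_subst:
  assumes "p \<in> pcar V" "\<And>x. x \<in> V \<Longrightarrow> \<sigma> x \<in> pcar W"
  shows "subst \<sigma> p \<in> pcar W"
  unfolding subst_def
proof (intro pcar_sum pcar_mult pcar_const pcar_mon)
  fix \<mu> x assume "\<mu> \<in> Poly_Mapping.keys p" "x \<in> Poly_Mapping.keys \<mu>"
  then have "x \<in> V" using assms(1) by (auto simp: pcar_def)
  then show "\<sigma> x \<in> pcar W" by (rule assms(2))
qed

lemma cring_poly_ring: "cring (poly_ring V)"
proof (rule cringI)
  show "abelian_group (poly_ring V)"
  proof (rule abelian_groupI)
    fix x assume "x \<in> carrier (poly_ring V)"
    then show "\<exists>y\<in>carrier (poly_ring V). y \<oplus>\<^bsub>poly_ring V\<^esub> x = \<zero>\<^bsub>poly_ring V\<^esub>"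
      by (intro bexI[of _ "-x"]) (simp_all add: pcar_uminus)
  qed (simp_all add: pcar_add add.assoc add.commute)
  show "Group.comm_monoid (poly_ring V)"
    by (rule comm_monoidI) (simp_all add: pcar_mult mult.assoc mult.commute)
qed (simp add: distrib_right)

lemma ring_poly_ring: "ring (poly_ring V)"
  using cring_poly_ring cring.axioms(1) by blast

lemma a_inv_poly_ring [simp]: assumes "p \<in> pcar V" shows "a_inv (poly_ring V) p = - p"
proof -
  have "abelian_group (poly_ring V)" using cring_poly_ring[of V] by (simp add: cring_def ring_def)
  then show ?thesis
    using abelian_group.minus_equality[where G="poly_ring V" and x=p and y="-p"] assms
    by (simp add: pcar_uminus)
qed

lemma subst_ring_hom:
  assumes "\<And>x. x \<in> V \<Longrightarrow> \<sigma> x \<in> pcar W"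
  shows "subst \<sigma> \<in> Ring.ring_hom (poly_ring V) (poly_ring W)"
  by (rule ring_hom_memI) (auto simp: pcar_subst assms subst_mult subst_add)

lemma subst_ring_hom_ring:
  assumes "\<And>x. x \<in> V \<Longrightarrow> \<sigma> x \<in> pcar W"
  shows "ring_hom_ring (poly_ring V) (poly_ring W) (subst \<sigma>)"
  by (rule ring_hom_ringI2) (auto simp: ring_poly_ring subst_ring_hom assms)

section \<open>Ideals\<close>

lemma ideal_add: assumes "ideal I (poly_ring V)" "a \<in> I" "b \<in> I" shows "a + b \<in> I"
  using additive_subgroup.a_closed[OF ideal.axioms(1)[OF assms(1)] assms(2,3)] by simp

lemma ideal_zero: assumes "ideal I (poly_ring V)" shows "0 \<in> I"
  using additive_subgroup.zero_closed[OF ideal.axioms(1)[OF assms(1)]] by simp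

lemma ideal_sub: assumes "ideal I (poly_ring V)" shows "I \<subseteq> pcar V"
  using additive_subgroup.a_subset[OF ideal.axioms(1)[OF assms(1)]] by simp

lemma ideal_uminus: assumes "ideal I (poly_ring V)" "a \<in> I" shows "- a \<in> I"
proof -
  have "a \<in> pcar V" using ideal_sub[OF assms(1)] assms(2) by blast
  then show ?thesis
    using additive_subgroup.a_inv_closed[OF ideal.axioms(1)[OF assms(1)] assms(2)] by simp
qed

lemma ideal_diff: "ideal I (poly_ring V) \<Longrightarrow> a \<in> I \<Longrightarrow> b \<in> I \<Longrightarrow> a - b \<in> I"
  using ideal_add[of I V a "-b"] ideal_uminus[of I V b] by simp

lemma ideal_lmult: "ideal I (poly_ring V) \<Longrightarrow> a \<in> I \<Longrightarrow> r \<in> pcar V \<Longrightarrow> r * a \<in> I"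
  using ideal.I_l_closed[of I "poly_ring V" a r] by simp

lemma ideal_rmult: "ideal I (poly_ring V) \<Longrightarrow> a \<in> I \<Longrightarrow> r \<in> pcar V \<Longrightarrow> a * r \<in> I"
  using ideal_lmult[of I V a r] by (simp add: mult.commute)

lemma ideal_sum: "ideal I (poly_ring V) \<Longrightarrow> (\<And>a. a \<in> A \<Longrightarrow> f a \<in> I) \<Longrightarrow> (\<Sum>a\<in>A. f a) \<in> I"
  by (induction A rule: infinite_finite_induct) (simp_all add: ideal_add ideal_zero)

lemma genideal_ideal: "Ss \<subseteq> pcar V \<Longrightarrow> ideal (genideal (poly_ring V) Ss) (poly_ring V)"
  using ring.genideal_ideal[OF ring_poly_ring, of Ss V] by simp

lemma genideal_incl: "Ss \<subseteq> pcar V \<Longrightarrow> g \<in> Ss \<Longrightarrow> g \<in> genideal (poly_ring V) Ss"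
  using ring.genideal_self[OF ring_poly_ring, of Ss V] by auto

lemma prod_diff_ideal:
  assumes I: "ideal I (poly_ring V)"
    and "\<And>a. a \<in> A \<Longrightarrow> f a \<in> pcar V" "\<And>a. a \<in> A \<Longrightarrow> g a \<in> pcar V"
    and "\<And>a. a \<in> A \<Longrightarrow> f a - g a \<in> I"
  shows "(\<Prod>a\<in>A. f a) - (\<Prod>a\<in>A. g a) \<in> I"
  using assms(2-)
proof (induction A rule: infinite_finite_induct)
  case (infinite A) then show ?case by (simp add: ideal_zero[OF I])
next
  case empty then show ?case by (simp add: ideal_zero[OF I])
next
  case (insert x F)
  have eq: "(\<Prod>a\<in>insert x F. f a) - (\<Prod>a\<in>insert x F. g a) =
      f x * ((\<Prod>a\<in>F. f a) - (\<Prod>a\<in>F. g a)) + (f x - g x) * (\<Prod>a\<in>F. g a)"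
    using insert.hyps by (simp add: algebra_simps)
  show ?case unfolding eq
    by (intro ideal_add[OF I] ideal_lmult[OF I] ideal_rmult[OF I] insert.IH pcar_prod) (auto intro: insert.prems)
qed

lemma power_diff_ideal:
  assumes I: "ideal I (poly_ring V)" and "a \<in> pcar V" "b \<in> pcar V" "a - b \<in> I"
  shows "a ^ n - b ^ n \<in> I"
  using prod_diff_ideal[OF I, of "{..<n}" "\<lambda>_. a" "\<lambda>_. b"] assms by simp

lemma subst_congr_ideal:
  assumes I: "ideal I (poly_ring V)" and p: "p \<in> pcar V"
    and th: "\<And>x. x \<in> V \<Longrightarrow> \<theta> x \<in> pcar V" "\<And>x. x \<in> V \<Longrightarrow> \<theta> x - Var x \<in> I"
  shows "subst \<theta> p - p \<in> I"
proof -
  have "subst \<theta> p - p = subst \<theta> p - subst Var p" by simp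
  also have "\<dots> = (\<Sum>\<mu>\<in>Poly_Mapping.keys p. Poly_Mapping.single 0 (Poly_Mapping.lookup p \<mu>) * (mon \<theta> \<mu> - mon Var \<mu>))"
    unfolding subst_def by (simp add: sum_subtractf right_diff_distrib)
  also have "\<dots> \<in> I"
  proof (rule ideal_sum[OF I], rule ideal_lmult[OF I], unfold mon_def)
    fix \<mu> assume mu: "\<mu> \<in> Poly_Mapping.keys p"
    then have sub: "Poly_Mapping.keys \<mu> \<subseteq> V" using p by (auto simp: pcar_def)
    show "(\<Prod>x\<in>Poly_Mapping.keys \<mu>. \<theta> x ^ Poly_Mapping.lookup \<mu> x) - (\<Prod>x\<in>Poly_Mapping.keys \<mu>. Var x ^ Poly_Mapping.lookup \<mu> x) \<in> I"
      using sub by (intro prod_diff_ideal[OF I] power_diff_ideal[OF I] pcar_power th pcar_Var) auto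
  qed simp
  finally show ?thesis .
qed


lemma abelian_subgroup_ideal:
  assumes "ideal I (poly_ring V)" shows "abelian_subgroup I (poly_ring V)"
proof -
  have "abelian_group (poly_ring V)" using cring_poly_ring[of V] by (simp add: cring_def ring_def)
  then show ?thesis using abelian_subgroupI3[OF ideal.axioms(1)[OF assms]] by simp
qed

lemma rcos_eq_ideal_iff:
  assumes I: "ideal I (poly_ring V)" and x: "x \<in> pcar V"
  shows "(I +>\<^bsub>poly_ring V\<^esub> x = I) \<longleftrightarrow> x \<in> I"
proof
  assume "I +>\<^bsub>poly_ring V\<^esub> x = I"
  then show "x \<in> I"
    using abelian_subgroup.a_rcos_self[OF abelian_subgroup_ideal[OF I], of x] x by simp
next
  assume "x \<in> I" then show "I +>\<^bsub>poly_ring V\<^esub> x = I"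
    using abelian_subgroup.a_rcos_const[OF abelian_subgroup_ideal[OF I]] by simp
qed

lemma subst_preimage_ideal:
  assumes \<sigma>: "\<And>x. x \<in> V \<Longrightarrow> \<sigma> x \<in> pcar W"
    and GV: "GV \<subseteq> pcar V" and J: "ideal J (poly_ring W)"
    and c: "\<And>g. g \<in> GV \<Longrightarrow> subst \<sigma> g \<in> J"
    and p: "p \<in> genideal (poly_ring V) GV"
  shows "subst \<sigma> p \<in> J"
proof -
  let ?K = "{r \<in> carrier (poly_ring V). subst \<sigma> r \<in> J}"
  have "ideal ?K (poly_ring V)"
    using ring_hom_ring.ideal_vimage[OF subst_ring_hom_ring[OF \<sigma>] J] .
  moreover have "GV \<subseteq> ?K" using GV c by auto
  ultimately have "genideal (poly_ring V) GV \<subseteq> ?K"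
    using ring.genideal_minimal[OF ring_poly_ring] by blast
  then show ?thesis using p by blast
qed

lemma quot_iso:
  fixes \<sigma> :: "'v \<Rightarrow> 'w cpoly" and \<tau> :: "'w \<Rightarrow> 'v cpoly"
  assumes \<sigma>: "\<And>x. x \<in> V \<Longrightarrow> \<sigma> x \<in> pcar W"
    and \<tau>: "\<And>y. y \<in> W \<Longrightarrow> \<tau> y \<in> pcar V"
    and GV: "GV \<subseteq> pcar V" and GW: "GW \<subseteq> pcar W"
    and a: "\<And>y. y \<in> W \<Longrightarrow> subst \<sigma> (\<tau> y) = Var y"
    and b: "\<And>x. x \<in> V \<Longrightarrow> subst \<tau> (\<sigma> x) - Var x \<in> genideal (poly_ring V) GV"
    and c: "\<And>g. g \<in> GV \<Longrightarrow> subst \<sigma> g \<in> genideal (poly_ring W) GW"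
    and d: "\<And>g. g \<in> GW \<Longrightarrow> subst \<tau> g \<in> genideal (poly_ring V) GV"
  shows "calg_iso_quot (poly_ring V Quot genideal (poly_ring V) GV) (poly_ring W Quot genideal (poly_ring W) GW)"
proof -
  define IV where "IV = genideal (poly_ring V) GV"
  define IW where "IW = genideal (poly_ring W) GW"
  have IVi: "ideal IV (poly_ring V)" unfolding IV_def by (rule genideal_ideal[OF GV])
  have IWi: "ideal IW (poly_ring W)" unfolding IW_def by (rule genideal_ideal[OF GW])
  define Q where "Q = poly_ring W Quot IW"
  define h where "h = ((+>\<^bsub>poly_ring W\<^esub>) IW) \<circ> subst \<sigma>"
  have hom: "h \<in> Ring.ring_hom (poly_ring V) Q"
    unfolding h_def Q_def
    by (rule ring_hom_trans[OF subst_ring_hom[OF \<sigma>] ideal.rcos_ring_hom[OF IWi]])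
  have hr: "ring_hom_ring (poly_ring V) Q h"
    by (rule ring_hom_ringI2[OF ring_poly_ring _ hom]) (simp add: Q_def ideal.quotient_is_ring[OF IWi])
  have h_simp: "h p = IW +>\<^bsub>poly_ring W\<^esub> subst \<sigma> p" for p by (simp add: h_def)
  have inv: "subst \<sigma> (subst \<tau> q) = q" if q: "q \<in> pcar W" for q
  proof -
    have "subst \<sigma> (subst \<tau> q) = subst (\<lambda>y. subst \<sigma> (\<tau> y)) q" by (rule subst_comp)
    also have "\<dots> = subst Var q"
      by (rule subst_cong, rule a) (use q in \<open>auto simp: pcar_def\<close>)
    finally show ?thesis by simp
  qed
  have surj: "h ` carrier (poly_ring V) = carrier Q"
  proof
    show "h ` carrier (poly_ring V) \<subseteq> carrier Q"
      using hom by (auto simp: Ring.ring_hom_def)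
    show "carrier Q \<subseteq> h ` carrier (poly_ring V)"
    proof
      fix X assume "X \<in> carrier Q"
      then obtain q where q: "q \<in> pcar W" "X = IW +>\<^bsub>poly_ring W\<^esub> q"
        by (auto simp: Q_def FactRing_def A_RCOSETS_def' )
      have "subst \<tau> q \<in> pcar V" by (rule pcar_subst[OF q(1) \<tau>])
      moreover have "h (subst \<tau> q) = X" using q inv by (simp add: h_simp)
      ultimately show "X \<in> h ` carrier (poly_ring V)" by force
    qed
  qed
  have ker: "a_kernel (poly_ring V) Q h = IV"
  proof -
    have "p \<in> IV \<longleftrightarrow> subst \<sigma> p \<in> IW" if p: "p \<in> pcar V" for p
    proof
      assume "p \<in> IV" then show "subst \<sigma> p \<in> IW"
        using subst_preimage_ideal[where \<sigma>=\<sigma> and V=V and W=W and GV=GV and J=IW and p=p] \<sigma> GV IWi c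
        unfolding IW_def IV_def by blast
    next
      assume sp: "subst \<sigma> p \<in> IW"
      have t1: "subst \<tau> (subst \<sigma> p) \<in> IV"
        using sp subst_preimage_ideal[where \<sigma>=\<tau> and V=W and W=V and GV=GW and J=IV and p="subst \<sigma> p"] \<tau> GW IVi d
        unfolding IW_def IV_def by blast
      have t2: "subst (\<lambda>x. subst \<tau> (\<sigma> x)) p - p \<in> IV"
        by (rule subst_congr_ideal[OF IVi p]) (auto intro: pcar_subst \<sigma> \<tau> b simp: IV_def)
      have "p = subst \<tau> (subst \<sigma> p) - (subst (\<lambda>x. subst \<tau> (\<sigma> x)) p - p)"
        by (simp add: subst_comp)
      also have "\<dots> \<in> IV" by (rule ideal_diff[OF IVi t1 t2])
      finally show "p \<in> IV" .
    qed
    note key = this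
    show ?thesis
    proof (rule Set.set_eqI)
      fix p
      have "p \<in> a_kernel (poly_ring V) Q h \<longleftrightarrow> p \<in> pcar V \<and> h p = IW"
        by (simp add: a_kernel_def' Q_def FactRing_def)
      also have "\<dots> \<longleftrightarrow> p \<in> IV"
      proof (cases "p \<in> pcar V")
        case True
        have "subst \<sigma> p \<in> pcar W" using pcar_subst[OF True \<sigma>] .
        then show ?thesis using True key[OF True] rcos_eq_ideal_iff[OF IWi] by (simp add: h_simp)
      next
        case False
        then show ?thesis using ideal_sub[OF IVi] by blast
      qed
      finally show "p \<in> a_kernel (poly_ring V) Q h \<longleftrightarrow> p \<in> IV" .
    qed
  qed
  have iso: "(\<lambda>X. the_elem (h ` X)) \<in> ring_iso (poly_ring V Quot IV) Q"
    using ring_hom_ring.FactRing_iso_set[OF hr surj] unfolding ker .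
  show ?thesis
    unfolding calg_iso_quot_def IV_def[symmetric] IW_def[symmetric] Q_def[symmetric]
  proof (rule bexI[OF _ iso], intro allI ballI impI)
    fix c X assume X: "X \<in> carrier (poly_ring V Quot IV)" and cX: "const_poly c \<in> X"
    obtain y where y: "h ` X = {y}"
      using ring_hom_ring.the_elem_wf[OF hr, of X] X unfolding ker by blast
    have "y = h (const_poly c)" using y cX by blast
    then have "the_elem (h ` X) = IW +>\<^bsub>poly_ring W\<^esub> const_poly c"
      using y by (simp add: h_simp const_poly_def)
    moreover have "const_poly c \<in> IW +>\<^bsub>poly_ring W\<^esub> const_poly c"
      using abelian_subgroup.a_rcos_self[OF abelian_subgroup_ideal[OF IWi], of "const_poly c"]
      by (simp add: const_poly_def)
    ultimately show "const_poly c \<in> the_elem (h ` X)" by simp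
  qed
qed


lemma downward_closed_eq:
  fixes Ss :: "nat set"
  assumes fin: "finite Ss" and dc: "\<And>i j. i \<in> Ss \<Longrightarrow> j \<le> i \<Longrightarrow> j \<in> Ss"
  shows "Ss = {..<card Ss}"
proof (cases "Ss = {}")
  case True then show ?thesis by simp
next
  case False
  define M where "M = Max Ss"
  have MS: "M \<in> Ss" using fin False by (simp add: M_def)
  have "Ss = {..M}"
  proof
    show "Ss \<subseteq> {..M}" using Max_ge[OF fin] by (auto simp: M_def)
    show "{..M} \<subseteq> Ss" using dc[OF MS] by auto
  qed
  then show ?thesis by (simp add: lessThan_Suc_atMost)
qed

lemma full_rank_kernel:
  fixes B :: "complex mat"
  assumes B: "B \<in> carrier_mat nr n"
  shows "\<exists>k M. M \<in> carrier_mat k n \<and> vec_space.rank k M = k \<and>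
     (\<forall>w\<in>carrier_vec n. (M *\<^sub>v w = 0\<^sub>v k) = (B *\<^sub>v w = 0\<^sub>v nr))"
proof -
  define C where "C = gauss_jordan_single B"
  note g = gauss_jordan_single[OF B C_def[symmetric]]
  have C: "C \<in> carrier_mat nr n" by (rule g(2))
  from g(3) obtain f where pf: "pivot_fun C f n"
    unfolding row_echelon_form_def using C by auto
  have dC: "dim_row C = nr" using C by auto
  note pD = pivot_funD[OF dC pf]
  have down: "f j = n" if "f i = n" "i \<le> j" "j < nr" for i j
    using that
  proof (induction j)
    case 0 then show ?case by simp
  next
    case (Suc j)
    show ?case
    proof (cases "i = Suc j")
      case True then show ?thesis using Suc by simp
    next
      case False
      then have "f j = n" using Suc by simp
      moreover have "f (Suc j) \<le> n" using pD(1)[of "Suc j"] Suc by simp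
      ultimately show ?thesis using pD(3)[of j] Suc by auto
    qed
  qed
  define Ss where "Ss = {i. i < nr \<and> f i < n}"
  define k where "k = card Ss"
  have Ss: "Ss = {..<k}" unfolding k_def
  proof (rule downward_closed_eq)
    show "finite Ss" unfolding Ss_def by simp
    fix i j assume i: "i \<in> Ss" and ji: "j \<le> i"
    then have jn: "j < nr" unfolding Ss_def by auto
    have "f j < n"
    proof (rule ccontr)
      assume "\<not> f j < n" then have "f j = n" using pD(1)[OF jn] by simp
      then have "f i = n" using down[of j i] ji i unfolding Ss_def by auto
      then show False using i by (simp add: Ss_def)
    qed
    then show "j \<in> Ss" using jn by (simp add: Ss_def)
  qed
  have kle: "k \<le> nr"
  proof -
    have "Ss \<subseteq> {..<nr}" unfolding Ss_def by auto
    then have "card Ss \<le> nr" using card_mono[of "{..<nr}" Ss] by simp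
    then show ?thesis by (simp add: k_def)
  qed
  have fk: "f i < n" if "i < k" for i using that Ss unfolding Ss_def by blast
  have zero_rows: "row C i = 0\<^sub>v n" if "k \<le> i" "i < nr" for i
  proof -
    have "i \<notin> Ss" using that Ss by auto
    then have "f i = n" using pD(1)[OF that(2)] that(2) unfolding Ss_def by simp
    then show ?thesis using pivot_fun_zero_row_iff[OF pf C that(2)] by simp
  qed
  define M where "M = mat k n (\<lambda>(i,j). C $$ (i,j))"
  have M: "M \<in> carrier_mat k n" by (simp add: M_def)
  have ker: "(M *\<^sub>v w = 0\<^sub>v k) = (C *\<^sub>v w = 0\<^sub>v nr)" if w: "w \<in> carrier_vec n" for w
  proof -
    have eq: "(M *\<^sub>v w) $ i = (C *\<^sub>v w) $ i" if "i < k" for i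
    proof -
      have "row M i = row C i" using that kle C by (auto simp: M_def row_def)
      then show ?thesis using that kle C M by simp
    qed
    have z: "(C *\<^sub>v w) $ i = 0" if "k \<le> i" "i < nr" for i
      using zero_rows[OF that] C w that by simp
    show ?thesis
    proof
      assume h: "M *\<^sub>v w = 0\<^sub>v k"
      show "C *\<^sub>v w = 0\<^sub>v nr"
      proof (rule eq_vecI)
        fix i assume "i < dim_vec (0\<^sub>v nr :: complex vec)"
        then have i: "i < nr" by simp
        show "(C *\<^sub>v w) $ i = 0\<^sub>v nr $ i"
        proof (cases "i < k")
          case True
          then have "(C *\<^sub>v w) $ i = (M *\<^sub>v w) $ i" using eq by simp
          also have "\<dots> = 0" using h True by simp
          finally show ?thesis using i by simp
        next
          case False then show ?thesis using z i by simp
        qed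
      qed (use C in simp)
    next
      assume h: "C *\<^sub>v w = 0\<^sub>v nr"
      show "M *\<^sub>v w = 0\<^sub>v k"
      proof (rule eq_vecI)
        fix i assume "i < dim_vec (0\<^sub>v k :: complex vec)"
        then have i: "i < k" by simp
        have "(M *\<^sub>v w) $ i = (C *\<^sub>v w) $ i" using eq i by simp
        also have "\<dots> = 0" using h i kle by simp
        finally show "(M *\<^sub>v w) $ i = 0\<^sub>v k $ i" using i by simp
      qed (use M in simp)
    qed
  qed
  interpret vs: vec_space "TYPE(complex)" k .
  have colM: "col M (f i) = unit_vec k i" if i: "i < k" for i
  proof (rule eq_vecI)
    fix i' assume "i' < dim_vec (unit_vec k i :: complex vec)"
    then have i': "i' < k" by simp
    have "col M (f i) $ i' = C $$ (i', f i)" using i' fk[OF i] by (simp add: M_def)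
    also have "\<dots> = (if i' = i then 1 else 0)"
      using pD(4)[of i] pD(5)[of i i'] i i' kle fk[OF i] by auto
    finally show "col M (f i) $ i' = unit_vec k i $ i'" using i' i by (simp add: unit_vec_def)
  qed (simp add: M_def)
  have sub: "set (unit_vecs k) \<subseteq> set (cols M)"
  proof
    fix x :: "complex vec" assume "x \<in> set (unit_vecs k)"
    then obtain i where i: "i < k" "x = unit_vec k i" unfolding unit_vecs_def by auto
    then have "x = col M (f i)" using colM by simp
    moreover have "f i < dim_col M" using fk[OF i(1)] M by simp
    ultimately show "x \<in> set (cols M)" unfolding cols_def by auto
  qed
  have li: "vs.lin_indpt (set (unit_vecs k))"
    using vs.unit_vecs_basis unfolding vs.basis_def by simp
  have cardu: "card (set (unit_vecs k :: complex vec list)) = k"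
    using distinct_card[OF vs.unit_vecs_distinct] by simp
  have ge: "vs.rank M \<ge> k" using vs.rank_ge_card_indpt[OF M sub li] cardu by simp
  obtain S' where mx: "maximal S' (\<lambda>T. T \<subseteq> set (cols M) \<and> vs.lin_indpt T)"
    using maximal_exists[of "(\<lambda>T. T \<subseteq> set (cols M) \<and> vs.lin_indpt T)" "card (set (cols M))" "{}"]
    by (meson List.finite_set card_mono empty_iff empty_subsetI vs.finite_lin_indpt2 rev_finite_subset)
  have rk: "vs.rank M = card S'" by (rule vs.rank_card_indpt[OF M mx])
  have S'c: "S' \<subseteq> carrier_vec k" "vs.lin_indpt S'"
    using mx cols_dim[of M] M unfolding maximal_def by auto
  have "card S' \<le> k" using vs.li_le_dim(2)[OF vs.fin_dim S'c] vs.dim_is_n by simp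
  then have "vs.rank M = k" using ge rk by simp
  then show ?thesis using M ker g(1) by blast
qed


definition rs :: "(nat \<Rightarrow> complex) \<Rightarrow> nat set \<Rightarrow> nat \<Rightarrow> complex" where
  "rs f Ss = (\<lambda>j. if j \<in> Ss then f j else 0)"

locale dat =
  fixes A :: "complex mat" and ns :: "nat \<Rightarrow> nat" and l :: "nat \<Rightarrow> nat \<Rightarrow> nat" and m :: nat
  assumes valid: "valid_data A ns l m"
begin

abbreviation "nr \<equiv> dim_row A"
abbreviation "nc \<equiv> dim_col A"

lemma nc2: "nc \<ge> 2" and nr2: "nr \<ge> 2"
  using valid unfolding valid_data_def data_r_def data_c_def by auto

lemma ns_pos: "i < nc \<Longrightarrow> ns i > 0"
  using valid nc2 unfolding valid_data_def data_r_def by auto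

lemma l_pos: "i < nc \<Longrightarrow> j \<in> {1..ns i} \<Longrightarrow> l i j > 0"
  using valid nc2 unfolding valid_data_def data_r_def by auto

lemma pw: "pairwise_lin_indep_cols A"
  using valid unfolding valid_data_def by auto

lemma dr_eq: "{..data_r A} = {..<nc}"
  using nc2 unfolding data_r_def by auto

definition Kf :: "(nat \<Rightarrow> complex) set" where
  "Kf = {f. \<forall>a<nr. (\<Sum>j<nc. A $$ (a,j) * f j) = 0}"

lemma Kf_zero: "(\<lambda>_. 0) \<in> Kf" by (simp add: Kf_def)

lemma Kf_add: "f \<in> Kf \<Longrightarrow> g \<in> Kf \<Longrightarrow> (\<lambda>j. f j + g j) \<in> Kf"
  by (simp add: Kf_def distrib_left sum.distrib)

lemma Kf_smult: "f \<in> Kf \<Longrightarrow> (\<lambda>j. c * f j) \<in> Kf"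
proof -
  assume f: "f \<in> Kf"
  have "(\<Sum>j<nc. A $$ (a,j) * (c * f j)) = c * (\<Sum>j<nc. A $$ (a,j) * f j)" for a
    by (simp add: sum_distrib_left algebra_simps)
  then show ?thesis using f by (simp add: Kf_def)
qed

lemma Kf_diff: "f \<in> Kf \<Longrightarrow> g \<in> Kf \<Longrightarrow> (\<lambda>j. f j - g j) \<in> Kf"
  by (simp add: Kf_def right_diff_distrib sum_subtractf)

lemma Kf_cong: "(\<And>j. j < nc \<Longrightarrow> f j = g j) \<Longrightarrow> f \<in> Kf \<longleftrightarrow> g \<in> Kf"
  by (simp add: Kf_def)

lemma Kf_sum: "(\<And>i. i \<in> I \<Longrightarrow> F i \<in> Kf) \<Longrightarrow> (\<lambda>j. \<Sum>i\<in>I. F i j) \<in> Kf"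
proof (induction I rule: infinite_finite_induct)
  case (infinite I) then show ?case by (simp add: Kf_zero)
next
  case empty then show ?case by (simp add: Kf_zero)
next
  case (insert x I') then show ?case using Kf_add[of "F x" "\<lambda>j. \<Sum>i\<in>I'. F i j"] by simp
qed

lemma kernel_iff: "v \<in> mat_kernel A \<longleftrightarrow> v \<in> carrier_vec nc \<and> (\<lambda>j. v $ j) \<in> Kf"
proof -
  have "(A *\<^sub>v v = 0\<^sub>v nr) \<longleftrightarrow> (\<forall>a<nr. (\<Sum>j<nc. A $$ (a,j) * v $ j) = 0)" if v: "v \<in> carrier_vec nc"
  proof -
    have "(A *\<^sub>v v) $ a = (\<Sum>j<nc. A $$ (a,j) * v $ j)" if "a < nr" for a
      using that v by (auto simp: scalar_prod_def row_def lessThan_atLeast0 intro!: sum.cong)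
    then show ?thesis by (auto simp: vec_eq_iff)
  qed
  then show ?thesis by (auto simp: mat_kernel_def Kf_def)
qed

lemma vec_in_kernel: "f \<in> Kf \<Longrightarrow> vec nc f \<in> mat_kernel A"
  unfolding kernel_iff using Kf_cong[of "\<lambda>j. vec nc f $ j" f] by simp

definition Lin :: "nat set" where "Lin = {i. i < nc \<and> ns i = 1 \<and> l i 1 = 1}"

definition goodE :: "nat set \<Rightarrow> bool" where
  "goodE E \<longleftrightarrow> E \<subseteq> Lin \<and> (\<forall>i\<in>E. \<exists>u\<in>Kf. u i = 1 \<and> (\<forall>j\<in>E. j \<noteq> i \<longrightarrow> u j = 0))"

lemma goodE_card: "goodE E \<Longrightarrow> card E \<le> nc"
proof -
  assume "goodE E"
  then have "E \<subseteq> {..<nc}" unfolding goodE_def Lin_def by auto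
  then show ?thesis using card_mono[of "{..<nc}" E] by simp
qed

lemma E_ex: "\<exists>E. goodE E \<and> (\<forall>E'. goodE E' \<longrightarrow> card E' \<le> card E)"
proof -
  have "goodE {}" by (simp add: goodE_def)
  moreover have "\<forall>y. goodE y \<longrightarrow> card y < Suc nc" using goodE_card by (simp add: le_imp_less_Suc)
  ultimately show ?thesis using ex_has_greatest_nat[of goodE "{}" card "Suc nc"] by blast
qed

definition E :: "nat set" where "E = (SOME E. goodE E \<and> (\<forall>E'. goodE E' \<longrightarrow> card E' \<le> card E))"

lemma E_good: "goodE E" and E_max: "goodE E' \<Longrightarrow> card E' \<le> card E"
  using someI_ex[OF E_ex] unfolding E_def[symmetric] by auto

lemma E_Lin: "E \<subseteq> Lin" using E_good unfolding goodE_def by auto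
lemma E_nc: "i \<in> E \<Longrightarrow> i < nc" using E_Lin unfolding Lin_def by auto
lemma finite_E: "finite E" using E_nc finite_subset[of E "{..<nc}"] by auto

definition u :: "nat \<Rightarrow> nat \<Rightarrow> complex" where
  "u i = (SOME f. f \<in> Kf \<and> f i = 1 \<and> (\<forall>j\<in>E. j \<noteq> i \<longrightarrow> f j = 0))"

lemma u_props: assumes "i \<in> E"
  shows "u i \<in> Kf" "u i i = 1" "\<And>j. j \<in> E \<Longrightarrow> j \<noteq> i \<Longrightarrow> u i j = 0"
proof -
  have "\<exists>f. f \<in> Kf \<and> f i = 1 \<and> (\<forall>j\<in>E. j \<noteq> i \<longrightarrow> f j = 0)" using E_good assms unfolding goodE_def by blast
  from someI_ex[OF this] show "u i \<in> Kf" "u i i = 1" "\<And>j. j \<in> E \<Longrightarrow> j \<noteq> i \<Longrightarrow> u i j = 0"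
    unfolding u_def[symmetric] by auto
qed

definition Kp :: "(nat \<Rightarrow> complex) set" where "Kp = {f \<in> Kf. \<forall>i\<in>E. f i = 0}"

lemma Kp_Kf: "f \<in> Kp \<Longrightarrow> f \<in> Kf" by (simp add: Kp_def)
lemma Kp_E: "f \<in> Kp \<Longrightarrow> i \<in> E \<Longrightarrow> f i = 0" by (simp add: Kp_def)
lemma Kp_zero: "(\<lambda>_. 0) \<in> Kp" by (simp add: Kp_def Kf_zero)
lemma Kp_add: "f \<in> Kp \<Longrightarrow> g \<in> Kp \<Longrightarrow> (\<lambda>j. f j + g j) \<in> Kp" by (simp add: Kp_def Kf_add)
lemma Kp_diff: "f \<in> Kp \<Longrightarrow> g \<in> Kp \<Longrightarrow> (\<lambda>j. f j - g j) \<in> Kp" by (simp add: Kp_def Kf_diff)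
lemma Kp_smult: "f \<in> Kp \<Longrightarrow> (\<lambda>j. c * f j) \<in> Kp" by (simp add: Kp_def Kf_smult)
lemma Kp_cong: "(\<And>j. j < nc \<Longrightarrow> f j = g j) \<Longrightarrow> f \<in> Kp \<longleftrightarrow> g \<in> Kp"
  unfolding Kp_def using Kf_cong[of f g] E_nc by auto

lemma lin_zero:
  assumes i: "i \<in> Lin" "i \<notin> E" and f: "f \<in> Kp"
  shows "f i = 0"
proof (rule ccontr)
  assume fi: "f i \<noteq> 0"
  define g where "g = (\<lambda>j. (1 / f i) * f j)"
  have g: "g \<in> Kp" "g i = 1" unfolding g_def by (rule Kp_smult[OF f]) (use fi in simp)
  have "goodE (insert i E)"
    unfolding goodE_def
  proof (intro conjI ballI)
    show "insert i E \<subseteq> Lin" using i E_Lin by auto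
    fix k assume k: "k \<in> insert i E"
    show "\<exists>u\<in>Kf. u k = 1 \<and> (\<forall>j\<in>insert i E. j \<noteq> k \<longrightarrow> u j = 0)"
    proof (cases "k = i")
      case True
      then show ?thesis using g by (intro bexI[of _ g]) (auto simp: Kp_def)
    next
      case False
      then have kE: "k \<in> E" using k by simp
      define u' where "u' = (\<lambda>j. u k j - u k i * g j)"
      have "u' \<in> Kf" unfolding u'_def
        by (rule Kf_diff[OF u_props(1)[OF kE] Kf_smult[OF Kp_Kf[OF g(1)]]])
      moreover have "u' k = 1" using u_props[OF kE] Kp_E[OF g(1) kE] by (simp add: u'_def)
      moreover have "\<forall>j\<in>insert i E. j \<noteq> k \<longrightarrow> u' j = 0"
        using u_props[OF kE] Kp_E[OF g(1)] g(2) by (auto simp: u'_def)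
      ultimately show ?thesis by blast
    qed
  qed
  then have "card (insert i E) \<le> card E" by (rule E_max)
  then show False using i(2) finite_E by simp
qed

definition split :: "nat set \<Rightarrow> bool" where "split Ss \<longleftrightarrow> (\<forall>f\<in>Kp. rs f Ss \<in> Kp)"

abbreviation "U \<equiv> {..<nc}"

lemma split_U: "split U"
  unfolding split_def using Kp_cong[of "rs _ U"] by (auto simp: rs_def)

lemma split_compl: assumes "split Ss" shows "split (U - Ss)"
  unfolding split_def
proof
  fix f assume f: "f \<in> Kp"
  have "(\<lambda>j. f j - rs f Ss j) \<in> Kp" using Kp_diff[OF f] assms f unfolding split_def by blast
  moreover have "j < nc \<Longrightarrow> rs f (U - Ss) j = f j - rs f Ss j" for j by (simp add: rs_def)
  ultimately show "rs f (U - Ss) \<in> Kp" using Kp_cong[of "rs f (U - Ss)"] by auto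
qed

lemma rs_rs: "rs (rs f Ss) Tt = rs f (Ss \<inter> Tt)" by (auto simp: rs_def)

lemma split_int: "split Ss \<Longrightarrow> split Tt \<Longrightarrow> split (Ss \<inter> Tt)"
  unfolding split_def by (metis rs_rs)

lemma split_Inter: "finite F \<Longrightarrow> F \<noteq> {} \<Longrightarrow> (\<And>Ss. Ss \<in> F \<Longrightarrow> split Ss) \<Longrightarrow> split (\<Inter>F)"
proof (induction F rule: finite_ne_induct)
  case (singleton x) then show ?case by simp
next
  case (insert x F) then show ?case using split_int by simp
qed

definition cls :: "nat \<Rightarrow> nat set" where "cls i = \<Inter>{Ss. Ss \<subseteq> U \<and> split Ss \<and> i \<in> Ss}"

lemma cls_props: assumes i: "i < nc"
  shows "i \<in> cls i" "cls i \<subseteq> U" "split (cls i)"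
    "\<And>Ss. split Ss \<Longrightarrow> i \<in> Ss \<Longrightarrow> cls i \<subseteq> Ss"
proof -
  let ?F = "{Ss. Ss \<subseteq> U \<and> split Ss \<and> i \<in> Ss}"
  have UF: "U \<in> ?F" using i split_U by simp
  show "i \<in> cls i" unfolding cls_def by auto
  show "cls i \<subseteq> U" unfolding cls_def using UF by auto
  have "finite ?F" by (rule finite_subset[of _ "Pow U"]) auto
  then show "split (cls i)" unfolding cls_def using UF by (intro split_Inter) auto
  fix Ss assume "split Ss" "i \<in> Ss"
  then have "Ss \<inter> U \<in> ?F" using i split_int[OF _ split_U] by auto
  then show "cls i \<subseteq> Ss" unfolding cls_def by blast
qed

lemma cls_eq: assumes i: "i < nc" and j: "j \<in> cls i" shows "cls j = cls i"
proof -
  have jn: "j < nc" using cls_props(2)[OF i] j by auto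
  have sub: "cls j \<subseteq> cls i" using cls_props(4)[OF jn cls_props(3)[OF i] j] .
  have "i \<in> cls j"
  proof (rule ccontr)
    assume ni: "i \<notin> cls j"
    have "split (cls i \<inter> (U - cls j))" by (rule split_int[OF cls_props(3)[OF i] split_compl[OF cls_props(3)[OF jn]]])
    moreover have "i \<in> cls i \<inter> (U - cls j)" using ni i cls_props(1)[OF i] by auto
    ultimately have "cls i \<subseteq> cls i \<inter> (U - cls j)" using cls_props(4)[OF i] by blast
    then show False using j cls_props(1)[OF jn] by auto
  qed
  then have "cls i \<subseteq> cls j" using cls_props(4)[OF i cls_props(3)[OF jn]] by blast
  then show ?thesis using sub by auto
qed

lemma cls_min: assumes i: "i < nc" and "Ss \<subseteq> cls i" "split Ss" "Ss \<noteq> {}"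
  shows "Ss = cls i"
proof -
  obtain k where k: "k \<in> Ss" using assms by auto
  then have kc: "k \<in> cls i" using assms by auto
  then have kn: "k < nc" using cls_props(2)[OF i] by auto
  have "cls k \<subseteq> Ss" using cls_props(4)[OF kn assms(3) k] .
  then show ?thesis using cls_eq[OF i kc] assms(2) by auto
qed

definition supp :: "nat \<Rightarrow> bool" where "supp i \<longleftrightarrow> (\<exists>f\<in>Kp. f i \<noteq> 0)"

lemma nsupp_cls: assumes i: "i < nc" "\<not> supp i" shows "cls i = {i}"
proof -
  have "split {i}"
    unfolding split_def
  proof
    fix f assume "f \<in> Kp"
    then have "f i = 0" using assms unfolding supp_def by auto
    then have "rs f {i} = (\<lambda>_. 0)" by (auto simp: rs_def)
    then show "rs f {i} \<in> Kp" using Kp_zero by simp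
  qed
  then show ?thesis using cls_props(4)[OF i(1), of "{i}"] cls_props(1)[OF i(1)] by auto
qed

lemma supp_cls: assumes i: "i < nc" "supp i" and j: "j \<in> cls i" shows "supp j"
proof (rule ccontr)
  assume nj: "\<not> supp j"
  have jn: "j < nc" using cls_props(2)[OF i(1)] j by auto
  have "cls i = {j}" using cls_eq[OF i(1) j] nsupp_cls[OF jn nj] by simp
  then have "i = j" using cls_props(1)[OF i(1)] by auto
  then show False using nj i by simp
qed

lemma E_nsupp: "i \<in> E \<Longrightarrow> \<not> supp i"
  unfolding supp_def using Kp_E by auto

lemma supp_nLin: "supp i \<Longrightarrow> i \<notin> Lin"
  using lin_zero E_nsupp unfolding supp_def by blast

definition Bs :: "nat set set" where "Bs = cls ` {i. i < nc \<and> supp i}"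

lemma finite_Bs: "finite Bs" unfolding Bs_def by simp

lemma Bs_elem: assumes "B \<in> Bs" "j \<in> B" shows "j < nc" "supp j" "cls j = B"
proof -
  obtain i where i: "i < nc" "supp i" "B = cls i" using assms unfolding Bs_def by auto
  show "j < nc" using cls_props(2)[OF i(1)] i assms by auto
  show "supp j" using supp_cls[OF i(1,2)] i assms by auto
  show "cls j = B" using cls_eq[OF i(1)] i assms by auto
qed

lemma Bs_sub: "B \<in> Bs \<Longrightarrow> B \<subseteq> U" using Bs_elem(1) by auto

lemma Bs_E: "B \<in> Bs \<Longrightarrow> B \<inter> E = {}" using Bs_elem(2) E_nsupp by blast

lemma Bs_split: "B \<in> Bs \<Longrightarrow> split B"
  unfolding Bs_def using cls_props(3) by auto

lemma Bs_disj: "B \<in> Bs \<Longrightarrow> B' \<in> Bs \<Longrightarrow> j \<in> B \<Longrightarrow> j \<in> B' \<Longrightarrow> B = B'"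
  using Bs_elem(3) by metis

lemma Bs_cls: "j < nc \<Longrightarrow> supp j \<Longrightarrow> cls j \<in> Bs \<and> j \<in> cls j"
  unfolding Bs_def using cls_props(1) by auto

lemma Bs_min: assumes "B \<in> Bs" "Ss \<subseteq> B" "split Ss" "Ss \<noteq> {}" shows "Ss = B"
proof -
  obtain i where i: "i < nc" "supp i" "B = cls i" using assms unfolding Bs_def by auto
  then show ?thesis using cls_min[OF i(1)] assms by auto
qed

lemma decomp: assumes f: "f \<in> Kp" and j: "j < nc"
  shows "f j = (\<Sum>B\<in>Bs. rs f B j)"
proof (cases "supp j")
  case True
  define B0 where "B0 = cls j"
  have B0: "B0 \<in> Bs" "j \<in> B0" using Bs_cls[OF j True] by (auto simp: B0_def)
  have "(\<Sum>B\<in>Bs. rs f B j) = rs f B0 j + (\<Sum>B\<in>Bs - {B0}. rs f B j)"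
    using B0 finite_Bs by (simp add: sum.remove)
  also have "(\<Sum>B\<in>Bs - {B0}. rs f B j) = 0"
    using Bs_disj[OF _ B0(1) _ B0(2)] by (intro sum.neutral) (auto simp: rs_def)
  finally show ?thesis using B0 by (simp add: rs_def)
next
  case False
  then have "f j = 0" using f unfolding supp_def by auto
  moreover have "(\<Sum>B\<in>Bs. rs f B j) = 0"
    using Bs_elem(2) False by (intro sum.neutral) (auto simp: rs_def)
  ultimately show ?thesis by simp
qed

lemma Bs_card: assumes B: "B \<in> Bs" shows "card B \<ge> 2"
proof (rule ccontr)
  assume c: "\<not> card B \<ge> 2"
  obtain i where i: "i < nc" "supp i" "B = cls i" using B unfolding Bs_def by auto
  have iB: "i \<in> B" using cls_props(1)[OF i(1)] i(3) by simp
  have fin: "finite B" using Bs_sub[OF B] finite_subset by blast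
  have "card B > 0" using iB fin card_gt_0_iff by blast
  then have "card B = 1" using c by simp
  then obtain x where "B = {x}" using card_1_singletonE by blast
  then have Bi: "B = {i}" using iB by simp
  obtain f where f: "f \<in> Kp" "f i \<noteq> 0" using i(2) unfolding supp_def by auto
  have g: "rs f B \<in> Kf" using Bs_split[OF B] f unfolding split_def by (simp add: Kp_def)
  have col0: "A $$ (a, i) = 0" if a: "a < nr" for a
  proof -
    have "(\<Sum>j<nc. A $$ (a,j) * rs f B j) = 0" using g a by (simp add: Kf_def)
    moreover have "(\<Sum>j<nc. A $$ (a,j) * rs f B j) = (\<Sum>j<nc. if j = i then A $$ (a,i) * f i else 0)"
      by (rule sum.cong) (auto simp: Bi rs_def)
    moreover have "\<dots> = A $$ (a,i) * f i" using i(1) by simp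
    ultimately show ?thesis using f(2) by simp
  qed
  define j' where "j' = (if i = 0 then 1 else (0::nat))"
  have j': "j' < nc" "i \<noteq> j'" using nc2 by (auto simp: j'_def)
  have v0: "(1::complex) \<cdot>\<^sub>v col A i + 0 \<cdot>\<^sub>v col A j' = 0\<^sub>v nr"
  proof (rule eq_vecI)
    fix a assume "a < dim_vec (0\<^sub>v nr :: complex vec)"
    then have a: "a < nr" by simp
    show "((1::complex) \<cdot>\<^sub>v col A i + 0 \<cdot>\<^sub>v col A j') $ a = 0\<^sub>v nr $ a"
      using col0[OF a] a i(1) j' by simp
  qed simp
  have "(1::complex) = 0 \<and> (0::complex) = 0"
    by (rule pw[unfolded pairwise_lin_indep_cols_def, rule_format, OF i(1) j'(1) j'(2) v0])
  then show False by simp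
qed

end


lemma mult_vec_index:
  fixes M :: "complex mat"
  assumes "M \<in> carrier_mat k n" "i < k"
  shows "(M *\<^sub>v vec n g) $ i = (\<Sum>p<n. M $$ (i,p) * g p)"
  using assms by (auto simp: scalar_prod_def row_def lessThan_atLeast0 intro!: sum.cong)

lemma mult_unit_col:
  fixes M :: "complex mat"
  assumes M: "M \<in> carrier_mat k n" and x: "x < n"
  shows "M *\<^sub>v unit_vec n x = col M x"
  by (rule eq_vecI) (use M x in auto)

lemma mult_in_col_span:
  fixes M :: "complex mat"
  assumes M: "M \<in> carrier_mat k n" and I: "I \<subseteq> {..<n}"
  shows "M *\<^sub>v vec n (\<lambda>p. if p \<in> I then c p else 0) \<in> col_span M I"
proof -
  interpret vs: vec_space "TYPE(complex)" k .
  have dr: "dim_row M = k" using M by simp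
  have sub: "col M ` I \<subseteq> carrier_vec k" using M by auto
  have sm: "LinearCombinations.submodule class_ring (vs.span (col M ` I)) vs.V"
    by (rule vs.span_is_submodule[OF sub])
  have own: "col M ` I \<subseteq> vs.span (col M ` I)" by (rule vs.in_own_span[OF sub])
  have fin: "finite I" using I finite_subset by blast
  have "I' \<subseteq> I \<Longrightarrow> M *\<^sub>v vec n (\<lambda>p. if p \<in> I' then c p else 0) \<in> vs.span (col M ` I)" for I'
  proof (induction I' rule: infinite_finite_induct)
    case (infinite I') then show ?case using fin finite_subset by blast
  next
    case empty
    have "vec n (\<lambda>p. if p \<in> {} then c p else 0) = 0\<^sub>v n" by (auto simp: vec_eq_iff)
    moreover have "M *\<^sub>v 0\<^sub>v n = 0\<^sub>v k" using M by (intro eq_vecI) auto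
    ultimately have "M *\<^sub>v vec n (\<lambda>p. if p \<in> {} then c p else 0) = 0\<^sub>v k" by simp
    then show ?case using LinearCombinations.submodule.zero_closed[OF sm] by simp
  next
    case (insert x F)
    have x: "x < n" using insert.prems I by auto
    have eq: "vec n (\<lambda>p. if p \<in> insert x F then c p else 0) =
        vec n (\<lambda>p. if p \<in> F then c p else 0) + c x \<cdot>\<^sub>v unit_vec n x"
      using insert.hyps x by (auto simp: vec_eq_iff unit_vec_def)
    have "M *\<^sub>v vec n (\<lambda>p. if p \<in> insert x F then c p else 0) =
        M *\<^sub>v vec n (\<lambda>p. if p \<in> F then c p else 0) + c x \<cdot>\<^sub>v col M x"
      unfolding eq using M x
      by (simp add: mult_add_distrib_mat_vec[OF M] mult_mat_vec[OF M] mult_unit_col[OF M x])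
    moreover have "M *\<^sub>v vec n (\<lambda>p. if p \<in> F then c p else 0) \<in> vs.span (col M ` I)"
      using insert by auto
    moreover have "c x \<cdot>\<^sub>v col M x \<in> vs.span (col M ` I)"
      using LinearCombinations.submodule.smult_closed[OF sm, of "c x" "col M x"] own sub insert.prems by auto
    ultimately show ?case using LinearCombinations.submodule.m_closed[OF sm] by simp
  qed
  then show ?thesis unfolding col_span_def dr by blast
qed

lemma two_cols:
  fixes M :: "complex mat"
  assumes M: "M \<in> carrier_mat k n" and pq: "p < n" "q < n" "p \<noteq> q"
  shows "M *\<^sub>v vec n (\<lambda>r. if r = p then a else if r = q then b else 0) = a \<cdot>\<^sub>v col M p + b \<cdot>\<^sub>v col M q"
proof (rule eq_vecI)
  fix i assume "i < dim_vec (a \<cdot>\<^sub>v col M p + b \<cdot>\<^sub>v col M q)"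
  then have i: "i < k" using M by simp
  have "(M *\<^sub>v vec n (\<lambda>r. if r = p then a else if r = q then b else 0)) $ i =
      (\<Sum>r<n. M $$ (i,r) * (if r = p then a else if r = q then b else 0))"
    by (rule mult_vec_index[OF M i])
  also have "\<dots> = (\<Sum>r<n. (if r = p then M $$ (i,p) * a else 0) + (if r = q then M $$ (i,q) * b else 0))"
    using pq by (intro sum.cong) auto
  also have "\<dots> = M $$ (i,p) * a + M $$ (i,q) * b"
    using pq by (simp add: sum.distrib)
  finally show "(M *\<^sub>v vec n (\<lambda>r. if r = p then a else if r = q then b else 0)) $ i = (a \<cdot>\<^sub>v col M p + b \<cdot>\<^sub>v col M q) $ i"
    using M i pq by (simp add: mult.commute)
qed (use M in simp)

lemma rows_ge2:
  fixes M :: "complex mat"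
  assumes M: "M \<in> carrier_mat k n" and n: "n \<ge> 2" and pw: "pairwise_lin_indep_cols M"
  shows "k \<ge> 2"
proof (rule ccontr)
  assume "\<not> k \<ge> 2"
  then have k: "k = 0 \<or> k = 1" by auto
  have pwM: "\<And>a b. a \<cdot>\<^sub>v col M 0 + b \<cdot>\<^sub>v col M 1 = 0\<^sub>v k \<Longrightarrow> a = 0 \<and> b = 0"
  proof -
    fix a b assume "a \<cdot>\<^sub>v col M 0 + b \<cdot>\<^sub>v col M 1 = 0\<^sub>v k"
    moreover have "0 < dim_col M" "1 < dim_col M" "(0::nat) \<noteq> 1" using M n by auto
    ultimately show "a = 0 \<and> b = 0" using M
      by (intro pw[unfolded pairwise_lin_indep_cols_def, rule_format]) auto
  qed
  define x where "x = col M 0 $ 0"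
  define y where "y = col M 1 $ 0"
  show False
  proof (cases "k = 0 \<or> x = 0")
    case True
    have "(1::complex) \<cdot>\<^sub>v col M 0 + 0 \<cdot>\<^sub>v col M 1 = 0\<^sub>v k"
    proof (rule eq_vecI)
      fix i assume "i < dim_vec (0\<^sub>v k :: complex vec)"
      then have "i = 0" "k = 1" using k by auto
      then show "((1::complex) \<cdot>\<^sub>v col M 0 + 0 \<cdot>\<^sub>v col M 1) $ i = 0\<^sub>v k $ i"
        using True M n by (simp add: x_def)
    qed (use M in simp)
    then show False using pwM[of 1 0] by simp
  next
    case False
    then have k1: "k = 1" "x \<noteq> 0" using k by auto
    have "y \<cdot>\<^sub>v col M 0 + (- x) \<cdot>\<^sub>v col M 1 = 0\<^sub>v k"
    proof (rule eq_vecI)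
      fix i assume "i < dim_vec (0\<^sub>v k :: complex vec)"
      then have "i = 0" using k1 by auto
      then show "(y \<cdot>\<^sub>v col M 0 + (- x) \<cdot>\<^sub>v col M 1) $ i = 0\<^sub>v k $ i"
        using M n k1 by (simp add: x_def y_def)
    qed (use M in simp)
    then show False using pwM[of y "- x"] k1 by simp
  qed
qed

context dat begin

definition \<beta> :: "nat set \<Rightarrow> nat \<Rightarrow> nat" where
  "\<beta> B = (SOME h. bij_betw h {..<card B} B)"

lemma \<beta>_bij: assumes "B \<in> Bs" shows "bij_betw (\<beta> B) {..<card B} B"
proof -
  have "finite B" using Bs_sub[OF assms] finite_subset by blast
  then have "\<exists>h. bij_betw h {..<card B} B" using ex_bij_betw_nat_finite[of B] by (simp add: atLeast0LessThan)
  then show ?thesis unfolding \<beta>_def by (rule someI_ex)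
qed

definition pos :: "nat set \<Rightarrow> nat \<Rightarrow> nat" where
  "pos B i = inv_into {..<card B} (\<beta> B) i"

lemma pos_props: assumes B: "B \<in> Bs"
  shows "\<And>i. i \<in> B \<Longrightarrow> pos B i < card B"
    "\<And>i. i \<in> B \<Longrightarrow> \<beta> B (pos B i) = i"
    "\<And>p. p < card B \<Longrightarrow> pos B (\<beta> B p) = p"
    "\<And>p. p < card B \<Longrightarrow> \<beta> B p \<in> B"
proof -
  have bij: "bij_betw (\<beta> B) {..<card B} B" by (rule \<beta>_bij[OF B])
  have im: "\<beta> B ` {..<card B} = B" using bij by (simp add: bij_betw_def)
  fix i assume i: "i \<in> B"
  show "pos B i < card B" unfolding pos_def using inv_into_into[of i "\<beta> B" "{..<card B}"] i im by auto
  show "\<beta> B (pos B i) = i" unfolding pos_def using bij_betw_inv_into_right[OF bij i] .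
next
  have bij: "bij_betw (\<beta> B) {..<card B} B" by (rule \<beta>_bij[OF B])
  fix p assume p: "p < card B"
  show "pos B (\<beta> B p) = p" unfolding pos_def using bij_betw_inv_into_left[OF bij] p by simp
  show "\<beta> B p \<in> B" using bij p by (auto simp: bij_betw_def)
qed

definition AB :: "nat set \<Rightarrow> complex mat" where
  "AB B = mat nr (card B) (\<lambda>(a,p). A $$ (a, \<beta> B p))"

definition ext :: "nat set \<Rightarrow> complex vec \<Rightarrow> nat \<Rightarrow> complex" where
  "ext B w = (\<lambda>i. if i \<in> B then w $ pos B i else 0)"

lemma AB_carrier: "AB B \<in> carrier_mat nr (card B)" by (simp add: AB_def)

lemma col_AB: assumes B: "B \<in> Bs" and p: "p < card B" shows "col (AB B) p = col A (\<beta> B p)"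
proof -
  have "\<beta> B p < nc" using pos_props(4)[OF B p] Bs_sub[OF B] by auto
  then show ?thesis using p by (intro eq_vecI) (auto simp: AB_def)
qed

lemma ext_Kp_iff: assumes B: "B \<in> Bs" shows "ext B w \<in> Kp \<longleftrightarrow> ext B w \<in> Kf"
  using Bs_E[OF B] by (auto simp: Kp_def ext_def)

lemma AB_ker: assumes B: "B \<in> Bs" and w: "w \<in> carrier_vec (card B)"
  shows "(AB B *\<^sub>v w = 0\<^sub>v nr) \<longleftrightarrow> ext B w \<in> Kp"
proof -
  have s: "(\<Sum>j<nc. A $$ (a,j) * ext B w j) = (AB B *\<^sub>v w) $ a" if a: "a < nr" for a
  proof -
    have "(\<Sum>j<nc. A $$ (a,j) * ext B w j) = (\<Sum>j\<in>B. A $$ (a,j) * ext B w j)"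
      by (rule sum.mono_neutral_right) (use Bs_sub[OF B] in \<open>auto simp: ext_def\<close>)
    also have "\<dots> = (\<Sum>j\<in>B. A $$ (a,j) * w $ pos B j)"
      by (rule sum.cong) (auto simp: ext_def)
    also have "\<dots> = (\<Sum>p<card B. A $$ (a, \<beta> B p) * w $ p)"
    proof -
      have "(\<Sum>p<card B. A $$ (a, \<beta> B p) * w $ p) = (\<Sum>p<card B. (\<lambda>j. A $$ (a,j) * w $ pos B j) (\<beta> B p))"
        by (rule sum.cong) (auto simp: pos_props(3)[OF B])
      also have "\<dots> = (\<Sum>j\<in>B. A $$ (a,j) * w $ pos B j)" by (rule sum.reindex_bij_betw[OF \<beta>_bij[OF B]])
      finally show ?thesis by simp
    qed
    also have "\<dots> = (AB B *\<^sub>v w) $ a"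
      using a w by (auto simp: AB_def scalar_prod_def row_def lessThan_atLeast0 intro!: sum.cong)
    finally show ?thesis .
  qed
  have "(AB B *\<^sub>v w = 0\<^sub>v nr) \<longleftrightarrow> (\<forall>a<nr. (AB B *\<^sub>v w) $ a = 0)"
    by (auto simp: vec_eq_iff AB_def)
  also have "\<dots> \<longleftrightarrow> ext B w \<in> Kf" using s by (simp add: Kf_def)
  finally show ?thesis using ext_Kp_iff[OF B] by simp
qed

definition MB :: "nat set \<Rightarrow> complex mat" where
  "MB B = (SOME M. M \<in> carrier_mat (dim_row M) (card B) \<and> vec_space.rank (dim_row M) M = dim_row M \<and>
      (\<forall>w\<in>carrier_vec (card B). (M *\<^sub>v w = 0\<^sub>v (dim_row M)) = (AB B *\<^sub>v w = 0\<^sub>v nr)))"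

abbreviation "kB B \<equiv> dim_row (MB B)"

lemma MB_ex: "\<exists>M. M \<in> carrier_mat (dim_row M) (card B) \<and> vec_space.rank (dim_row M) M = dim_row M \<and>
      (\<forall>w\<in>carrier_vec (card B). (M *\<^sub>v w = 0\<^sub>v (dim_row M)) = (AB B *\<^sub>v w = 0\<^sub>v nr))"
proof -
  obtain k M where kM: "M \<in> carrier_mat k (card B)" "vec_space.rank k M = k"
    "\<forall>w\<in>carrier_vec (card B). (M *\<^sub>v w = 0\<^sub>v k) = (AB B *\<^sub>v w = 0\<^sub>v nr)"
    using full_rank_kernel[OF AB_carrier[of B]] by blast
  have "dim_row M = k" using kM(1) by simp
  then show ?thesis using kM by blast
qed

lemma MB_all: "MB B \<in> carrier_mat (kB B) (card B) \<and> vec_space.rank (kB B) (MB B) = kB B \<and>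
      (\<forall>w\<in>carrier_vec (card B). (MB B *\<^sub>v w = 0\<^sub>v (kB B)) = (AB B *\<^sub>v w = 0\<^sub>v nr))"
  unfolding MB_def by (rule someI_ex[OF MB_ex])

lemma MB_props:
  shows "MB B \<in> carrier_mat (kB B) (card B)" "vec_space.rank (kB B) (MB B) = kB B"
    "\<And>w. w \<in> carrier_vec (card B) \<Longrightarrow> (MB B *\<^sub>v w = 0\<^sub>v (kB B)) = (AB B *\<^sub>v w = 0\<^sub>v nr)"
  using MB_all[of B] by blast+

lemma MB_ker: assumes "B \<in> Bs" "w \<in> carrier_vec (card B)"
  shows "(MB B *\<^sub>v w = 0\<^sub>v (kB B)) \<longleftrightarrow> ext B w \<in> Kp"
  using MB_props(3)[OF assms(2)] AB_ker[OF assms] by blast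

lemma MB_kernel: assumes "B \<in> Bs"
  shows "w \<in> mat_kernel (MB B) \<longleftrightarrow> w \<in> carrier_vec (card B) \<and> ext B w \<in> Kp"
proof -
  have "dim_col (MB B) = card B" using MB_props(1)[of B] by simp
  then show ?thesis using MB_ker[OF assms, of w] unfolding mat_kernel_def by auto
qed

lemma MB_pw: assumes B: "B \<in> Bs" shows "pairwise_lin_indep_cols (MB B)"
  unfolding pairwise_lin_indep_cols_def
proof (intro allI impI)
  fix p q a b
  assume p: "p < dim_col (MB B)" and q: "q < dim_col (MB B)" and pq: "p \<noteq> q"
    and h: "a \<cdot>\<^sub>v col (MB B) p + b \<cdot>\<^sub>v col (MB B) q = 0\<^sub>v (kB B)"
  have M: "MB B \<in> carrier_mat (kB B) (card B)" by (rule MB_props(1))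
  have pc: "p < card B" "q < card B" using p q M by auto
  define w where "w = vec (card B) (\<lambda>r. if r = p then a else if r = q then b else 0)"
  have w: "w \<in> carrier_vec (card B)" by (simp add: w_def)
  have "MB B *\<^sub>v w = 0\<^sub>v (kB B)" unfolding w_def two_cols[OF M pc pq] by (rule h)
  then have "AB B *\<^sub>v w = 0\<^sub>v nr" using MB_props(3)[OF w] by simp
  then have "a \<cdot>\<^sub>v col A (\<beta> B p) + b \<cdot>\<^sub>v col A (\<beta> B q) = 0\<^sub>v nr"
    unfolding w_def two_cols[OF AB_carrier pc pq] col_AB[OF B pc(1)] col_AB[OF B pc(2)] .
  moreover have "\<beta> B p < nc" "\<beta> B q < nc"
    using pos_props(4)[OF B] pc Bs_sub[OF B] by auto
  moreover have "\<beta> B p \<noteq> \<beta> B q"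
  proof
    assume "\<beta> B p = \<beta> B q"
    then have "pos B (\<beta> B p) = pos B (\<beta> B q)" by simp
    then show False using pos_props(3)[OF B] pc pq by simp
  qed
  ultimately show "a = 0 \<and> b = 0"
    by (intro pw[unfolded pairwise_lin_indep_cols_def, rule_format]) auto
qed

end


context dat begin

definition nssB :: "nat set \<Rightarrow> nat \<Rightarrow> nat" where "nssB B = (\<lambda>p. ns (\<beta> B p))"
definition lsB :: "nat set \<Rightarrow> nat \<Rightarrow> nat \<Rightarrow> nat" where "lsB B = (\<lambda>p j. l (\<beta> B p) j)"

lemma kB_ge2: "B \<in> Bs \<Longrightarrow> kB B \<ge> 2"
  using rows_ge2[OF MB_props(1) Bs_card MB_pw] by simp

lemma kB_le: "B \<in> Bs \<Longrightarrow> kB B \<le> card B"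
  using vec_space.rank_le_nc[OF MB_props(1)[of B]] MB_props(2)[of B] by simp

lemma beta_nc: "B \<in> Bs \<Longrightarrow> p < card B \<Longrightarrow> \<beta> B p < nc"
  using pos_props(4) Bs_sub by blast

lemma block_valid: assumes B: "B \<in> Bs" shows "valid_data (MB B) (nssB B) (lsB B) 0"
proof -
  have dc: "dim_col (MB B) = card B" using MB_props(1)[of B] by simp
  have c2: "card B \<ge> 2" by (rule Bs_card[OF B])
  have "\<forall>i \<le> dim_col (MB B) - 1. nssB B i > 0"
    using ns_pos beta_nc[OF B] dc c2 by (auto simp: nssB_def)
  moreover have "\<forall>i \<le> dim_col (MB B) - 1. \<forall>j\<in>{1..nssB B i}. lsB B i j > 0"
    using l_pos beta_nc[OF B] dc c2 by (auto simp: nssB_def lsB_def)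
  ultimately show ?thesis
    unfolding valid_data_def data_r_def data_c_def
    using kB_ge2[OF B] kB_le[OF B] dc c2 MB_props(2)[of B] MB_pw[OF B] by auto
qed

lemma block_lprod: assumes B: "B \<in> Bs"
  shows "\<forall>i \<le> data_r (MB B). \<forall>j \<in> {1..nssB B i}. lsB B i j * nssB B i > 1"
proof (intro allI impI ballI)
  fix i j assume i: "i \<le> data_r (MB B)" and j: "j \<in> {1..nssB B i}"
  have dc: "dim_col (MB B) = card B" using MB_props(1)[of B] by simp
  have c2: "card B \<ge> 2" by (rule Bs_card[OF B])
  have ic: "i < card B" using i dc c2 unfolding data_r_def by auto
  define x where "x = \<beta> B i"
  have xB: "x \<in> B" using pos_props(4)[OF B ic] by (simp add: x_def)
  have xn: "x < nc" using beta_nc[OF B ic] by (simp add: x_def)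
  have nLin: "x \<notin> Lin" using supp_nLin Bs_elem(2)[OF B xB] by blast
  have j': "j \<in> {1..ns x}" using j by (simp add: nssB_def x_def)
  have lpos: "l x j > 0" by (rule l_pos[OF xn j'])
  have npos: "ns x > 0" by (rule ns_pos[OF xn])
  have "l x j * ns x > 1"
  proof (cases "ns x = 1")
    case True
    then have "j = 1" using j' by simp
    then have "l x j \<noteq> 1" using nLin True xn by (simp add: Lin_def)
    then have "l x j \<ge> 2" using lpos by simp
    then show ?thesis using True by simp
  next
    case False
    then have "ns x \<ge> 2" using npos by simp
    then have "l x j * ns x \<ge> 1 * 2" using lpos by (intro mult_mono) auto
    then show ?thesis by simp
  qed
  then show "lsB B i j * nssB B i > 1" by (simp add: lsB_def nssB_def x_def)
qed

lemma block_indec_mat: assumes B: "B \<in> Bs" shows "indecomposable_mat (MB B)"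
  unfolding indecomposable_mat_def
proof (intro allI impI notI)
  fix I assume I: "I \<noteq> {} \<and> I \<subset> {0..<dim_col (MB B)}"
  let ?M = "MB B" and ?n = "card B" and ?k = "kB B"
  let ?J = "{0..<card B} - I"
  have M: "?M \<in> carrier_mat ?k ?n" by (rule MB_props(1))
  have dc: "dim_col ?M = ?n" using M by simp
  have In: "I \<subseteq> {..<?n}" using I dc by auto
  have Ine: "I \<noteq> {}" using I by simp
  have Ips: "I \<subset> {0..<?n}" using I dc by simp
  from psubset_imp_ex_mem[OF Ips] obtain p0 where p0': "p0 \<in> {0..<?n} - I" ..
  have p0: "p0 < ?n" "p0 \<notin> I" using p0' by auto
  have Jn: "?J \<subseteq> {..<?n}" by auto
  assume h: "col_span (MB B) I \<inter> col_span (MB B) ({0..<dim_col (MB B)} - I) = {0\<^sub>v (dim_row (MB B))}"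
  then have h': "col_span ?M I \<inter> col_span ?M ?J = {0\<^sub>v ?k}" unfolding dc .
  define Ss where "Ss = \<beta> B ` I"
  have posI: "pos B i \<in> I \<longleftrightarrow> i \<in> Ss" if iB: "i \<in> B" for i
  proof
    assume "pos B i \<in> I"
    then have "\<beta> B (pos B i) \<in> \<beta> B ` I" by (rule imageI)
    then show "i \<in> Ss" unfolding Ss_def pos_props(2)[OF B iB] .
  next
    assume "i \<in> Ss"
    then obtain p where p: "p \<in> I" "i = \<beta> B p" unfolding Ss_def by auto
    then have "p < ?n" using In by auto
    then show "pos B i \<in> I" using p pos_props(3)[OF B] by simp
  qed
  have SsB: "Ss \<subseteq> B"
  proof
    fix x assume "x \<in> Ss"
    then obtain p where p: "p \<in> I" "x = \<beta> B p" unfolding Ss_def by auto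
    then have "p < ?n" using In by auto
    then show "x \<in> B" using p pos_props(4)[OF B] by simp
  qed
  have "split Ss"
    unfolding split_def
  proof
    fix f assume f: "f \<in> Kp"
    define w where "w = vec ?n (\<lambda>p. f (\<beta> B p))"
    define wI where "wI = vec ?n (\<lambda>p. if p \<in> I then f (\<beta> B p) else 0)"
    define wJ where "wJ = vec ?n (\<lambda>p. if p \<in> ?J then - f (\<beta> B p) else 0)"
    have "ext B w = rs f B"
    proof
      fix i show "ext B w i = rs f B i"
      proof (cases "i \<in> B")
        case True
        then show ?thesis using pos_props(1,2)[OF B True] by (simp add: ext_def rs_def w_def)
      next
        case False then show ?thesis by (simp add: ext_def rs_def)
      qed
    qed
    then have "ext B w \<in> Kp" using Bs_split[OF B] f unfolding split_def by simp
    then have Mw: "?M *\<^sub>v w = 0\<^sub>v ?k"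
      using MB_ker[OF B, of w] by (simp add: w_def)
    have eqIJ: "?M *\<^sub>v wI = ?M *\<^sub>v wJ"
    proof (rule eq_vecI)
      fix i assume "i < dim_vec (?M *\<^sub>v wJ)"
      then have i: "i < ?k" by (simp only: dim_mult_mat_vec)
      have e1: "(?M *\<^sub>v wI) $ i = (\<Sum>p<?n. ?M $$ (i,p) * (if p \<in> I then f (\<beta> B p) else 0))"
        unfolding wI_def by (rule mult_vec_index[OF M i])
      have e2: "(?M *\<^sub>v wJ) $ i = (\<Sum>p<?n. ?M $$ (i,p) * (if p \<in> ?J then - f (\<beta> B p) else 0))"
        unfolding wJ_def by (rule mult_vec_index[OF M i])
      have e3: "(?M *\<^sub>v w) $ i = (\<Sum>p<?n. ?M $$ (i,p) * f (\<beta> B p))"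
        unfolding w_def by (rule mult_vec_index[OF M i])
      have e4: "(\<Sum>p<?n. ?M $$ (i,p) * (if p \<in> I then f (\<beta> B p) else 0)) =
          (\<Sum>p<?n. ?M $$ (i,p) * f (\<beta> B p)) + (\<Sum>p<?n. ?M $$ (i,p) * (if p \<in> ?J then - f (\<beta> B p) else 0))"
      proof -
        have "(\<Sum>p<?n. ?M $$ (i,p) * (if p \<in> I then f (\<beta> B p) else 0)) =
          (\<Sum>p<?n. ?M $$ (i,p) * f (\<beta> B p) + ?M $$ (i,p) * (if p \<in> ?J then - f (\<beta> B p) else 0))"
        proof (rule sum.cong)
          fix p assume p: "p \<in> {..<?n}"
          show "?M $$ (i,p) * (if p \<in> I then f (\<beta> B p) else 0) =
              ?M $$ (i,p) * f (\<beta> B p) + ?M $$ (i,p) * (if p \<in> ?J then - f (\<beta> B p) else 0)"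
          proof (cases "p \<in> I")
            case True then show ?thesis by simp
          next
            case False then have "p \<in> ?J" using p by simp
            then show ?thesis using False by (simp add: algebra_simps)
          qed
        qed simp
        then show ?thesis by (simp only: sum.distrib)
      qed
      show "(?M *\<^sub>v wI) $ i = (?M *\<^sub>v wJ) $ i"
        unfolding e1 e2 e4 e3[symmetric] using Mw i by simp
    next
      show "dim_vec (?M *\<^sub>v wI) = dim_vec (?M *\<^sub>v wJ)" by simp
    qed
    have c1: "?M *\<^sub>v wI \<in> col_span ?M I" unfolding wI_def by (rule mult_in_col_span[OF M In])
    have c2: "?M *\<^sub>v wI \<in> col_span ?M ?J" unfolding eqIJ wJ_def by (rule mult_in_col_span[OF M Jn])
    have "?M *\<^sub>v wI \<in> col_span ?M I \<inter> col_span ?M ?J" using c1 c2 by (rule IntI)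
    then have "?M *\<^sub>v wI \<in> {0\<^sub>v ?k}" by (simp only: h')
    then have "?M *\<^sub>v wI = 0\<^sub>v ?k" by simp
    then have "ext B wI \<in> Kp" using MB_ker[OF B, of wI] by (simp add: wI_def)
    moreover have "ext B wI = rs f Ss"
    proof
      fix i show "ext B wI i = rs f Ss i"
      proof (cases "i \<in> B")
        case True
        have "ext B wI i = (if pos B i \<in> I then f (\<beta> B (pos B i)) else 0)"
          using pos_props(1)[OF B True] True by (simp add: ext_def wI_def)
        also have "\<dots> = rs f Ss i" using posI[OF True] pos_props(2)[OF B True] by (simp add: rs_def)
        finally show ?thesis .
      next
        case False
        then have "i \<notin> Ss" using SsB by blast
        then show ?thesis using False by (simp add: ext_def rs_def)
      qed
    qed
    ultimately show "rs f Ss \<in> Kp" by simp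
  qed
  moreover have "Ss \<noteq> {}" using Ine by (simp add: Ss_def)
  ultimately have SB: "Ss = B" using Bs_min[OF B SsB] by simp
  have "\<beta> B p0 \<in> Ss" using SB pos_props(4)[OF B p0(1)] by simp
  then have "pos B (\<beta> B p0) \<in> I" using posI pos_props(4)[OF B p0(1)] by simp
  then show False using pos_props(3)[OF B p0(1)] p0(2) by simp
qed

lemma block_indec: "B \<in> Bs \<Longrightarrow> indecomposable_data (MB B) (nssB B) (lsB B)"
  unfolding indecomposable_data_def using block_indec_mat block_lprod by blast

end


lemma single_sum: "Poly_Mapping.single k (\<Sum>a\<in>A. f a) = (\<Sum>a\<in>A. Poly_Mapping.single k (f a))"
  by (induction A rule: infinite_finite_induct) (simp_all add: single_add)

lemma keys_sum_single_sub:
  "Poly_Mapping.keys (\<Sum>a\<in>A. Poly_Mapping.single (f a) (e a)) \<subseteq> f ` A"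
  using Poly_Mapping.keys_sum[of "\<lambda>a. Poly_Mapping.single (f a) (e a)" A] by auto

context dat begin

definition t :: nat where "t = card Bs"

definition bl :: "nat \<Rightarrow> nat set" where "bl = (SOME h. bij_betw h {1..t} Bs)"

lemma bl_bij: "bij_betw bl {1..t} Bs"
  unfolding bl_def t_def using ex_bij_betw_nat_finite_1[OF finite_Bs] by (rule someI_ex)

lemma bl_Bs: "k \<in> {1..t} \<Longrightarrow> bl k \<in> Bs"
  using bl_bij by (auto simp: bij_betw_def)

definition blkof :: "nat \<Rightarrow> nat" where "blkof i = inv_into {1..t} bl (cls i)"

lemma blkof_props: assumes "i < nc" "supp i"
  shows "blkof i \<in> {1..t}" "bl (blkof i) = cls i"
proof -
  have c: "cls i \<in> Bs" using Bs_cls[OF assms] by simp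
  then show "blkof i \<in> {1..t}" unfolding blkof_def
    using bl_bij by (metis bij_betw_def inv_into_into)
  show "bl (blkof i) = cls i" unfolding blkof_def using bij_betw_inv_into_right[OF bl_bij c] .
qed

lemma blkof_beta: assumes k: "k \<in> {1..t}" and p: "p < card (bl k)"
  shows "blkof (\<beta> (bl k) p) = k" "pos (cls (\<beta> (bl k) p)) (\<beta> (bl k) p) = p"
proof -
  have B: "bl k \<in> Bs" by (rule bl_Bs[OF k])
  have x: "\<beta> (bl k) p \<in> bl k" by (rule pos_props(4)[OF B p])
  have c: "cls (\<beta> (bl k) p) = bl k" by (rule Bs_elem(3)[OF B x])
  show "blkof (\<beta> (bl k) p) = k" unfolding blkof_def c using bij_betw_inv_into_left[OF bl_bij k] .
  show "pos (cls (\<beta> (bl k) p)) (\<beta> (bl k) p) = p" unfolding c by (rule pos_props(3)[OF B p])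
qed

definition FI :: "nat set" where "FI = {i. i < nc \<and> \<not> supp i \<and> i \<notin> E}"
definition FT :: "var set" where "FT = (\<Union>i\<in>FI. (\<lambda>j. T i j) ` {1..ns i})"

lemma finite_FT: "finite FT" unfolding FT_def FI_def by auto

lemma FT_iff: "T i j \<in> FT \<longleftrightarrow> i \<in> FI \<and> j \<in> {1..ns i}" and FT_S: "S k \<notin> FT"
  unfolding FT_def by (auto simp: image_iff)

definition \<phi>0 :: "var \<Rightarrow> nat" where "\<phi>0 = (SOME h. bij_betw h FT {0..<card FT})"

lemma \<phi>0_bij: "bij_betw \<phi>0 FT {0..<card FT}"
  unfolding \<phi>0_def using ex_bij_betw_finite_nat[OF finite_FT] by (rule someI_ex)

definition m' :: nat where "m' = m + card FT"

definition \<phi> :: "var \<Rightarrow> nat" where "\<phi> x = m + 1 + \<phi>0 x"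

definition \<phi>inv :: "nat \<Rightarrow> var" where "\<phi>inv s = inv_into FT \<phi>0 (s - m - 1)"

lemma \<phi>_range: assumes x: "x \<in> FT" shows "\<phi> x \<in> {m+1..m'}"
proof -
  have "\<phi>0 x \<in> {0..<card FT}" by (rule bij_betw_apply[OF \<phi>0_bij x])
  then show ?thesis unfolding \<phi>_def m'_def by auto
qed

lemma \<phi>inv_\<phi>: "x \<in> FT \<Longrightarrow> \<phi>inv (\<phi> x) = x"
  unfolding \<phi>inv_def \<phi>_def using bij_betw_inv_into_left[OF \<phi>0_bij] by simp

lemma \<phi>_\<phi>inv: "s \<in> {m+1..m'} \<Longrightarrow> \<phi>inv s \<in> FT \<and> \<phi> (\<phi>inv s) = s"
proof -
  assume s: "s \<in> {m+1..m'}"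
  then have s': "s - m - 1 \<in> {0..<card FT}" unfolding m'_def by auto
  show ?thesis unfolding \<phi>inv_def \<phi>_def
    using bij_betw_inv_into_right[OF \<phi>0_bij s'] s' \<phi>0_bij s
    by (auto simp: bij_betw_def inv_into_into)
qed

definition \<pi> :: "var \<Rightarrow> nat \<times> var" where
  "\<pi> x = (case x of T i j \<Rightarrow> (if supp i then (blkof i, T (pos (cls i) i) j) else (0, S (\<phi> (T i j))))
     | S k \<Rightarrow> (0, S k))"

definition \<rho> :: "nat \<times> var \<Rightarrow> var" where
  "\<rho> y = (case y of (k, T p j) \<Rightarrow> T (\<beta> (bl k) p) j | (k, S s) \<Rightarrow> (if s \<le> m then S s else \<phi>inv s))"

definition As :: "nat \<Rightarrow> complex mat" where "As k = MB (bl k)"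
definition nss :: "nat \<Rightarrow> nat \<Rightarrow> nat" where "nss k = nssB (bl k)"
definition ls :: "nat \<Rightarrow> nat \<Rightarrow> nat \<Rightarrow> nat" where "ls k = lsB (bl k)"
definition ms :: "nat \<Rightarrow> nat" where "ms k = 0"

definition V :: "var set" where "V = data_vars A ns m"
definition W :: "(nat \<times> var) set" where "W = tensor_vars t As nss ms m'"

lemma V_T: "T i j \<in> V \<longleftrightarrow> i < nc \<and> j \<in> {1..ns i}"
  unfolding V_def data_vars_def data_r_def using nc2 by auto

lemma V_S: "S k \<in> V \<longleftrightarrow> k \<in> {1..m}"
  unfolding V_def data_vars_def by auto

lemma dr_MB: "B \<in> Bs \<Longrightarrow> data_r (MB B) = card B - 1"
  using MB_props(1)[of B] unfolding data_r_def by simp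

lemma W_iff: "y \<in> W \<longleftrightarrow>
   (\<exists>k p j. y = (k, T p j) \<and> k \<in> {1..t} \<and> p < card (bl k) \<and> j \<in> {1..ns (\<beta> (bl k) p)}) \<or>
   (\<exists>s. y = (0, S s) \<and> s \<in> {1..m'})"
proof -
  have dv: "data_vars (As k) (nss k) (ms k) = {T p j | p j. p < card (bl k) \<and> j \<in> {1..ns (\<beta> (bl k) p)}}"
    if k: "k \<in> {1..t}" for k
  proof -
    have B: "bl k \<in> Bs" by (rule bl_Bs[OF k])
    have "card (bl k) \<ge> 2" by (rule Bs_card[OF B])
    then show ?thesis unfolding data_vars_def As_def nss_def ms_def nssB_def dr_MB[OF B] by auto
  qed
  show ?thesis unfolding W_def tensor_vars_def using dv by fastforce
qed

lemma W_T: "(k, T p j) \<in> W \<longleftrightarrow> k \<in> {1..t} \<and> p < card (bl k) \<and> j \<in> {1..ns (\<beta> (bl k) p)}"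
  unfolding W_iff by auto

lemma W_S: "(k, S s) \<in> W \<longleftrightarrow> k = 0 \<and> s \<in> {1..m'}"
  unfolding W_iff by auto

lemma m_le: "m \<le> m'" unfolding m'_def by simp

lemma \<pi>_W: assumes "i < nc" "i \<notin> E" "j \<in> {1..ns i}" shows "\<pi> (T i j) \<in> W"
proof (cases "supp i")
  case True
  define B where "B = cls i"
  have B: "B \<in> Bs" "i \<in> B" using Bs_cls[OF assms(1) True] by (auto simp: B_def)
  have k: "blkof i \<in> {1..t}" "bl (blkof i) = B" using blkof_props[OF assms(1) True] by (auto simp: B_def)
  have p: "pos B i < card B" "\<beta> B (pos B i) = i" using pos_props(1,2)[OF B] by auto
  show ?thesis unfolding \<pi>_def using True k p assms(3) by (simp add: W_T B_def)
next
  case False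
  then have "T i j \<in> FT" using assms by (simp add: FT_iff FI_def)
  then have "\<phi> (T i j) \<in> {m+1..m'}" by (rule \<phi>_range)
  then show ?thesis unfolding \<pi>_def using False by (auto simp: W_S)
qed

lemma FT_elem: "x \<in> FT \<Longrightarrow> \<exists>i j. x = T i j \<and> i < nc \<and> \<not> supp i \<and> i \<notin> E \<and> j \<in> {1..ns i}"
  unfolding FT_def FI_def by auto

lemma FT_V: "x \<in> FT \<Longrightarrow> x \<in> V"
  using FT_elem V_T by blast

lemma \<rho>\<pi>: assumes "i < nc" "i \<notin> E" "j \<in> {1..ns i}" shows "\<rho> (\<pi> (T i j)) = T i j"
proof (cases "supp i")
  case True
  define B where "B = cls i"
  have B: "B \<in> Bs" "i \<in> B" using Bs_cls[OF assms(1) True] by (auto simp: B_def)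
  have k: "bl (blkof i) = B" using blkof_props[OF assms(1) True] by (auto simp: B_def)
  show ?thesis unfolding \<pi>_def \<rho>_def using True k pos_props(2)[OF B] by (simp add: B_def)
next
  case False
  have x: "T i j \<in> FT" using assms False by (auto simp: FT_iff FI_def)
  have "\<not> \<phi> (T i j) \<le> m" by (simp add: \<phi>_def)
  then show ?thesis unfolding \<pi>_def \<rho>_def using False \<phi>inv_\<phi>[OF x] by simp
qed

definition mono' :: "nat \<Rightarrow> (nat \<times> var \<Rightarrow>\<^sub>0 nat)" where
  "mono' i = (\<Sum>j\<in>{1..ns i}. Poly_Mapping.single (\<pi> (T i j)) (l i j))"

definition qE :: "nat \<Rightarrow> (nat \<times> var) cpoly" where
  "qE i = (\<Sum>j\<in>U - E. Poly_Mapping.single (mono' j) (- u i j))"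

definition \<sigma> :: "var \<Rightarrow> (nat \<times> var) cpoly" where
  "\<sigma> x = (case x of T i j \<Rightarrow> (if i \<in> E then qE i else Var (\<pi> x)) | S k \<Rightarrow> Var (\<pi> x))"

definition \<tau> :: "nat \<times> var \<Rightarrow> var cpoly" where "\<tau> y = Var (\<rho> y)"

lemma mono'_W: assumes "j < nc" "j \<notin> E" shows "Poly_Mapping.keys (mono' j) \<subseteq> W"
  using keys_sum_single_sub[of "\<lambda>j'. \<pi> (T j j')" "\<lambda>j'. l j j'" "{1..ns j}"] \<pi>_W[OF assms]
  unfolding mono'_def by blast

lemma qE_W: "qE i \<in> pcar W"
  unfolding qE_def by (intro pcar_sum pcar_single mono'_W) auto

lemma \<sigma>_carrier: assumes x: "x \<in> V" shows "\<sigma> x \<in> pcar W"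
proof (cases x)
  case (T i j)
  then have ij: "i < nc" "j \<in> {1..ns i}" using x V_T by auto
  show ?thesis
  proof (cases "i \<in> E")
    case True then show ?thesis using T qE_W by (simp add: \<sigma>_def)
  next
    case False then show ?thesis using T \<pi>_W[OF ij(1) False ij(2)] by (simp add: \<sigma>_def pcar_Var)
  qed
next
  case (S k)
  then have "k \<in> {1..m}" using x V_S by auto
  then have "(0, S k) \<in> W" using m_le W_S by auto
  then show ?thesis using S by (simp add: \<sigma>_def \<pi>_def pcar_Var)
qed

lemma \<rho>_V: assumes y: "y \<in> W" shows "\<rho> y \<in> V"
proof -
  consider (a) k p j where "y = (k, T p j)" "k \<in> {1..t}" "p < card (bl k)" "j \<in> {1..ns (\<beta> (bl k) p)}"
    | (b) s where "y = (0, S s)" "s \<in> {1..m'}"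
    using y W_iff by blast
  then show ?thesis
  proof cases
    case a
    have "\<beta> (bl k) p < nc" using beta_nc[OF bl_Bs[OF a(2)] a(3)] .
    then show ?thesis using a by (simp add: \<rho>_def V_T)
  next
    case b
    show ?thesis
    proof (cases "s \<le> m")
      case True then show ?thesis using b by (simp add: \<rho>_def V_S)
    next
      case False
      then have "s \<in> {m+1..m'}" using b by auto
      then show ?thesis using b False \<phi>_\<phi>inv FT_V by (simp add: \<rho>_def)
    qed
  qed
qed

lemma \<tau>_carrier: "y \<in> W \<Longrightarrow> \<tau> y \<in> pcar V"
  unfolding \<tau>_def by (rule pcar_Var[OF \<rho>_V])

lemma cond_a: assumes y: "y \<in> W" shows "subst \<sigma> (\<tau> y) = Var y"
proof -
  consider (a) k p j where "y = (k, T p j)" "k \<in> {1..t}" "p < card (bl k)" "j \<in> {1..ns (\<beta> (bl k) p)}"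
    | (b) s where "y = (0, S s)" "s \<in> {1..m'}"
    using y W_iff by blast
  then have "\<sigma> (\<rho> y) = Var y"
  proof cases
    case a
    define x where "x = \<beta> (bl k) p"
    have B: "bl k \<in> Bs" by (rule bl_Bs[OF a(2)])
    have xB: "x \<in> bl k" using pos_props(4)[OF B a(3)] by (simp add: x_def)
    have sx: "supp x" "x \<notin> E" using Bs_elem(2)[OF B xB] Bs_E[OF B] xB by auto
    have "\<rho> y = T x j" using a by (simp add: \<rho>_def x_def)
    then show ?thesis using a sx blkof_beta[OF a(2) a(3)] by (simp add: \<sigma>_def \<pi>_def x_def)
  next
    case b
    show ?thesis
    proof (cases "s \<le> m")
      case True then show ?thesis using b by (simp add: \<rho>_def \<sigma>_def \<pi>_def)
    next
      case False
      then have sr: "s \<in> {m+1..m'}" using b by auto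
      obtain i j where ij: "\<phi>inv s = T i j" "i < nc" "\<not> supp i" "i \<notin> E" "j \<in> {1..ns i}"
        using FT_elem \<phi>_\<phi>inv[OF sr] by blast
      have "\<phi> (T i j) = s" using \<phi>_\<phi>inv[OF sr] ij(1) by simp
      then show ?thesis using b False ij by (simp add: \<rho>_def \<sigma>_def \<pi>_def)
    qed
  qed
  then show ?thesis by (simp add: \<tau>_def)
qed

lemma mono_T_id: "mono_T id ns l i = (\<Sum>j\<in>{1..ns i}. Poly_Mapping.single (T i j) (l i j))"
  by (simp add: mono_T_def)

lemma g_poly_id: "g_poly id A ns l v = (\<Sum>i<nc. Poly_Mapping.single (mono_T id ns l i) (v $ i))"
  by (simp add: g_poly_def dr_eq)

lemma \<tau>_eq: "\<tau> = (\<lambda>y. Var (\<rho> y))" by (simp add: \<tau>_def fun_eq_iff)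

lemma subst_tau_mono': assumes "j < nc" "j \<notin> E"
  shows "subst \<tau> (Poly_Mapping.single (mono' j) c) = Poly_Mapping.single (mono_T id ns l j) c"
proof -
  have "subst \<tau> (Poly_Mapping.single (mono' j) c) =
      Poly_Mapping.single (\<Sum>j'\<in>{1..ns j}. Poly_Mapping.single (\<rho> (\<pi> (T j j'))) (l j j')) c"
    unfolding \<tau>_eq mono'_def by (rule subst_rename)
  also have "(\<Sum>j'\<in>{1..ns j}. Poly_Mapping.single (\<rho> (\<pi> (T j j'))) (l j j')) = mono_T id ns l j"
    unfolding mono_T_id by (rule sum.cong) (use \<rho>\<pi>[OF assms] in auto)
  finally show ?thesis .
qed

lemma mono_T_V: "i < nc \<Longrightarrow> Poly_Mapping.keys (mono_T id ns l i) \<subseteq> V"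
  using keys_sum_single_sub[of "\<lambda>j. T i j" "\<lambda>j. l i j" "{1..ns i}"] V_T
  unfolding mono_T_id by blast

lemma GV_carrier: "relations id A ns l \<subseteq> pcar V"
proof
  fix g assume "g \<in> relations id A ns l"
  then obtain v where "g = g_poly id A ns l v" unfolding relations_def by auto
  then show "g \<in> pcar V" unfolding g_poly_id by (auto intro!: pcar_sum pcar_single mono_T_V)
qed

abbreviation "IV \<equiv> genideal (poly_ring V) (relations id A ns l)"

lemma IV_ideal: "ideal IV (poly_ring V)" by (rule genideal_ideal[OF GV_carrier])

lemma GV_IV: "v \<in> mat_kernel A \<Longrightarrow> g_poly id A ns l v \<in> IV"
  by (rule genideal_incl[OF GV_carrier]) (auto simp: relations_def)

lemma cond_b: assumes x: "x \<in> V" shows "subst \<tau> (\<sigma> x) - Var x \<in> IV"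
proof (cases x)
  case (T i j)
  then have ij: "i < nc" "j \<in> {1..ns i}" using x V_T by auto
  show ?thesis
  proof (cases "i \<in> E")
    case False
    have "subst \<tau> (\<sigma> x) = Var x" using T False \<rho>\<pi>[OF ij(1) False ij(2)] by (simp add: \<sigma>_def \<tau>_def)
    then show ?thesis using ideal_zero[OF IV_ideal] by simp
  next
    case True
    then have Lin: "ns i = 1" "l i 1 = 1" using E_Lin by (auto simp: Lin_def)
    then have j1: "j = 1" using ij by simp
    have q: "subst \<tau> (\<sigma> x) = (\<Sum>j'\<in>U - E. Poly_Mapping.single (mono_T id ns l j') (- u i j'))"
      using T True by (simp add: \<sigma>_def qE_def subst_sum subst_tau_mono')
    have mi: "mono_T id ns l i = Poly_Mapping.single (T i 1) 1" using Lin by (simp add: mono_T_id)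
    have vx: "Var x = Poly_Mapping.single (mono_T id ns l i) 1" using T j1 mi by (simp add: Var_def)
    have UE: "U = (U - E) \<union> E" using E_nc by auto
    have "g_poly id A ns l (vec nc (u i)) = (\<Sum>j'<nc. Poly_Mapping.single (mono_T id ns l j') (u i j'))"
      unfolding g_poly_id by (rule sum.cong) auto
    also have "\<dots> = (\<Sum>j'\<in>U - E. Poly_Mapping.single (mono_T id ns l j') (u i j')) +
        (\<Sum>j'\<in>E. Poly_Mapping.single (mono_T id ns l j') (u i j'))"
      by (subst UE, rule sum.union_disjoint) (auto simp: finite_E)
    also have "(\<Sum>j'\<in>E. Poly_Mapping.single (mono_T id ns l j') (u i j')) = Poly_Mapping.single (mono_T id ns l i) 1"
    proof -
      have "(\<Sum>j'\<in>E. Poly_Mapping.single (mono_T id ns l j') (u i j')) =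
          Poly_Mapping.single (mono_T id ns l i) (u i i) + (\<Sum>j'\<in>E - {i}. Poly_Mapping.single (mono_T id ns l j') (u i j'))"
        using True finite_E by (simp add: sum.remove)
      also have "(\<Sum>j'\<in>E - {i}. Poly_Mapping.single (mono_T id ns l j') (u i j')) = 0"
        using u_props(3)[OF True] by (intro sum.neutral) auto
      finally show ?thesis by (simp only: add_0_right u_props(2)[OF True])
    qed
    finally have g: "g_poly id A ns l (vec nc (u i)) =
        (\<Sum>j'\<in>U - E. Poly_Mapping.single (mono_T id ns l j') (u i j')) + Poly_Mapping.single (mono_T id ns l i) 1" .
    have "subst \<tau> (\<sigma> x) - Var x = - g_poly id A ns l (vec nc (u i))"
      unfolding q vx g by (simp add: single_uminus sum_negf)
    moreover have "g_poly id A ns l (vec nc (u i)) \<in> IV"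
      by (rule GV_IV[OF vec_in_kernel[OF u_props(1)[OF True]]])
    ultimately show ?thesis using ideal_uminus[OF IV_ideal] by simp
  qed
next
  case (S k)
  then have "k \<in> {1..m}" using x V_S by auto
  then have "subst \<tau> (\<sigma> x) = Var x" using S by (simp add: \<sigma>_def \<tau>_def \<pi>_def \<rho>_def)
  then show ?thesis using ideal_zero[OF IV_ideal] by simp
qed

lemma mono_T_Pair: "mono_T (Pair k) (nss k) (ls k) p =
    (\<Sum>j\<in>{1..ns (\<beta> (bl k) p)}. Poly_Mapping.single (k, T p j) (l (\<beta> (bl k) p) j))"
  by (simp add: mono_T_def nss_def ls_def nssB_def lsB_def)

lemma g_poly_Pair: assumes k: "k \<in> {1..t}"
  shows "g_poly (Pair k) (As k) (nss k) (ls k) w =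
    (\<Sum>p<card (bl k). Poly_Mapping.single (mono_T (Pair k) (nss k) (ls k) p) (w $ p))"
proof -
  have B: "bl k \<in> Bs" by (rule bl_Bs[OF k])
  have "card (bl k) \<ge> 2" by (rule Bs_card[OF B])
  then have "{..data_r (As k)} = {..<card (bl k)}" unfolding As_def dr_MB[OF B] by auto
  then show ?thesis by (simp add: g_poly_def)
qed

abbreviation "GW \<equiv> (\<Union>k\<in>{1..t}. relations (Pair k) (As k) (nss k) (ls k))"

lemma GW_carrier: "GW \<subseteq> pcar W"
proof
  fix g assume "g \<in> GW"
  then obtain k w where k: "k \<in> {1..t}" and g: "g = g_poly (Pair k) (As k) (nss k) (ls k) w"
    unfolding relations_def by auto
  have "Poly_Mapping.keys (mono_T (Pair k) (nss k) (ls k) p) \<subseteq> W" if p: "p < card (bl k)" for p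
    using keys_sum_single_sub[of "\<lambda>j. (k, T p j)" "\<lambda>j. l (\<beta> (bl k) p) j" "{1..ns (\<beta> (bl k) p)}"]
      W_T k p unfolding mono_T_Pair by auto
  then show "g \<in> pcar W" unfolding g g_poly_Pair[OF k] by (auto intro!: pcar_sum pcar_single)
qed

lemma cond_d: assumes g: "g \<in> GW" shows "subst \<tau> g \<in> IV"
proof -
  obtain k w where k: "k \<in> {1..t}" and w: "w \<in> mat_kernel (As k)"
    and g: "g = g_poly (Pair k) (As k) (nss k) (ls k) w"
    using g unfolding relations_def by auto
  define B where "B = bl k"
  have B: "B \<in> Bs" unfolding B_def by (rule bl_Bs[OF k])
  have wk: "w \<in> carrier_vec (card B)" "ext B w \<in> Kp"
    using w MB_kernel[OF B] by (auto simp: As_def B_def)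
  have st: "subst \<tau> (Poly_Mapping.single (mono_T (Pair k) (nss k) (ls k) p) c) =
      Poly_Mapping.single (mono_T id ns l (\<beta> B p)) c" for p c
  proof -
    have "subst \<tau> (Poly_Mapping.single (mono_T (Pair k) (nss k) (ls k) p) c) =
        Poly_Mapping.single (\<Sum>j\<in>{1..ns (\<beta> (bl k) p)}. Poly_Mapping.single (\<rho> (k, T p j)) (l (\<beta> (bl k) p) j)) c"
      unfolding \<tau>_eq mono_T_Pair by (rule subst_rename)
    then show ?thesis by (simp add: \<rho>_def mono_T_id B_def)
  qed
  have "subst \<tau> g = (\<Sum>p<card B. Poly_Mapping.single (mono_T id ns l (\<beta> B p)) (w $ p))"
    unfolding g g_poly_Pair[OF k] subst_sum st B_def ..
  also have "\<dots> = (\<Sum>p<card B. (\<lambda>i. Poly_Mapping.single (mono_T id ns l i) (ext B w i)) (\<beta> B p))"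
    by (rule sum.cong) (auto simp: ext_def pos_props[OF B])
  also have "\<dots> = (\<Sum>i\<in>B. Poly_Mapping.single (mono_T id ns l i) (ext B w i))"
    by (rule sum.reindex_bij_betw[OF \<beta>_bij[OF B]])
  also have "\<dots> = (\<Sum>i<nc. Poly_Mapping.single (mono_T id ns l i) (ext B w i))"
    by (rule sum.mono_neutral_left) (use Bs_sub[OF B] in \<open>auto simp: ext_def\<close>)
  also have "\<dots> = g_poly id A ns l (vec nc (ext B w))"
    unfolding g_poly_id by (rule sum.cong) auto
  finally have eq: "subst \<tau> g = g_poly id A ns l (vec nc (ext B w))" .
  show ?thesis unfolding eq by (rule GV_IV[OF vec_in_kernel[OF Kp_Kf[OF wk(2)]]])
qed

abbreviation "IW \<equiv> genideal (poly_ring W) GW"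

lemma IW_ideal: "ideal IW (poly_ring W)" by (rule genideal_ideal[OF GW_carrier])

lemma GW_IW: "k \<in> {1..t} \<Longrightarrow> w \<in> mat_kernel (As k) \<Longrightarrow> g_poly (Pair k) (As k) (nss k) (ls k) w \<in> IW"
  by (rule genideal_incl[OF GW_carrier]) (auto simp: relations_def)

lemma mono'_beta: assumes k: "k \<in> {1..t}" and p: "p < card (bl k)"
  shows "mono' (\<beta> (bl k) p) = mono_T (Pair k) (nss k) (ls k) p"
proof -
  define x where "x = \<beta> (bl k) p"
  have B: "bl k \<in> Bs" by (rule bl_Bs[OF k])
  have xB: "x \<in> bl k" using pos_props(4)[OF B p] by (simp add: x_def)
  have sx: "supp x" using Bs_elem(2)[OF B xB] .
  have "\<pi> (T x j) = (k, T p j)" for j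
    using sx blkof_beta[OF k p] by (simp add: \<pi>_def x_def)
  then show ?thesis unfolding mono'_def mono_T_Pair x_def[symmetric] by simp
qed

lemma subst_sigma_single: assumes i: "i < nc"
  shows "subst \<sigma> (Poly_Mapping.single (mono_T id ns l i) c) =
    (if i \<in> E then (\<Sum>j\<in>U - E. Poly_Mapping.single (mono' j) (- (c * u i j)))
     else Poly_Mapping.single (mono' i) c)"
proof (cases "i \<in> E")
  case True
  then have Lin: "ns i = 1" "l i 1 = 1" using E_Lin by (auto simp: Lin_def)
  then have mi: "mono_T id ns l i = Poly_Mapping.single (T i 1) 1" by (simp add: mono_T_id)
  have "subst \<sigma> (Poly_Mapping.single (mono_T id ns l i) c) = Poly_Mapping.single 0 c * qE i"
    unfolding mi subst_single using True by (simp add: \<sigma>_def)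
  also have "\<dots> = (\<Sum>j\<in>U - E. Poly_Mapping.single (mono' j) (- (c * u i j)))"
    unfolding qE_def sum_distrib_left by (simp add: mult_single)
  finally show ?thesis using True by simp
next
  case False
  have "subst \<sigma> (Poly_Mapping.single (mono_T id ns l i) c) = subst (\<lambda>x. Var (\<pi> x)) (Poly_Mapping.single (mono_T id ns l i) c)"
  proof (rule subst_cong)
    fix \<mu> x assume "\<mu> \<in> Poly_Mapping.keys (Poly_Mapping.single (mono_T id ns l i) c)" "x \<in> Poly_Mapping.keys \<mu>"
    then have "x \<in> Poly_Mapping.keys (mono_T id ns l i)" by (cases "c = 0") auto
    then obtain j where "x = T i j"
      using keys_sum_single_sub[of "\<lambda>j. T i j" "\<lambda>j. l i j" "{1..ns i}"] unfolding mono_T_id by auto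
    then show "\<sigma> x = Var (\<pi> x)" using False by (simp add: \<sigma>_def)
  qed
  also have "\<dots> = Poly_Mapping.single (mono' i) c"
    unfolding mono_T_id mono'_def by (rule subst_rename)
  finally show ?thesis using False by simp
qed

lemma cond_c: assumes g: "g \<in> relations id A ns l" shows "subst \<sigma> g \<in> IW"
proof -
  obtain v where v: "v \<in> mat_kernel A" and g: "g = g_poly id A ns l v"
    using g unfolding relations_def by auto
  define f where "f = (\<lambda>j. v $ j)"
  have f: "f \<in> Kf" using v kernel_iff by (simp add: f_def)
  define w where "w = (\<lambda>j. f j - (\<Sum>i\<in>E. f i * u i j))"
  have wKf: "w \<in> Kf" unfolding w_def
    by (rule Kf_diff[OF f Kf_sum]) (rule Kf_smult[OF u_props(1)])
  have wE: "w k = 0" if k: "k \<in> E" for k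
  proof -
    have "(\<Sum>i\<in>E. f i * u i k) = f k * u k k + (\<Sum>i\<in>E - {k}. f i * u i k)"
      using k finite_E by (simp add: sum.remove)
    also have "(\<Sum>i\<in>E - {k}. f i * u i k) = 0"
      using u_props(3) k by (intro sum.neutral) auto
    finally show ?thesis using u_props(2)[OF k] by (simp add: w_def)
  qed
  have wKp: "w \<in> Kp" using wKf wE by (simp add: Kp_def)
  have UE: "U = (U - E) \<union> E" using E_nc by auto
  have "subst \<sigma> g = (\<Sum>i<nc. subst \<sigma> (Poly_Mapping.single (mono_T id ns l i) (f i)))"
    unfolding g g_poly_id subst_sum f_def ..
  also have "\<dots> = (\<Sum>i\<in>U - E. subst \<sigma> (Poly_Mapping.single (mono_T id ns l i) (f i))) +
      (\<Sum>i\<in>E. subst \<sigma> (Poly_Mapping.single (mono_T id ns l i) (f i)))"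
    by (subst UE, rule sum.union_disjoint) (auto simp: finite_E)
  also have "(\<Sum>i\<in>U - E. subst \<sigma> (Poly_Mapping.single (mono_T id ns l i) (f i))) =
      (\<Sum>j\<in>U - E. Poly_Mapping.single (mono' j) (f j))"
    by (rule sum.cong) (auto simp: subst_sigma_single)
  also have "(\<Sum>i\<in>E. subst \<sigma> (Poly_Mapping.single (mono_T id ns l i) (f i))) =
      (\<Sum>i\<in>E. \<Sum>j\<in>U - E. Poly_Mapping.single (mono' j) (- (f i * u i j)))"
    by (rule sum.cong) (auto simp: subst_sigma_single E_nc)
  also have "\<dots> = (\<Sum>j\<in>U - E. \<Sum>i\<in>E. Poly_Mapping.single (mono' j) (- (f i * u i j)))"
    by (rule sum.swap)
  also have "\<dots> = (\<Sum>j\<in>U - E. Poly_Mapping.single (mono' j) (- (\<Sum>i\<in>E. f i * u i j)))"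
    by (rule sum.cong) (simp_all add: single_sum[symmetric] sum_negf)
  also have "(\<Sum>j\<in>U - E. Poly_Mapping.single (mono' j) (f j)) + \<dots> =
      (\<Sum>j\<in>U - E. Poly_Mapping.single (mono' j) (w j))"
    by (simp add: sum.distrib[symmetric] single_add[symmetric] w_def)
  also have "\<dots> = (\<Sum>j\<in>U - E. \<Sum>B\<in>Bs. Poly_Mapping.single (mono' j) (rs w B j))"
    by (rule sum.cong) (auto simp: single_sum[symmetric] decomp[OF wKp, symmetric])
  also have "\<dots> = (\<Sum>B\<in>Bs. \<Sum>j\<in>U - E. Poly_Mapping.single (mono' j) (rs w B j))"
    by (rule sum.swap)
  also have "\<dots> = (\<Sum>B\<in>Bs. \<Sum>j\<in>B. Poly_Mapping.single (mono' j) (w j))"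
  proof (rule sum.cong)
    fix B assume B: "B \<in> Bs"
    have sub: "B \<subseteq> U - E" using Bs_sub[OF B] Bs_E[OF B] by auto
    have "(\<Sum>j\<in>U - E. Poly_Mapping.single (mono' j) (rs w B j)) = (\<Sum>j\<in>B. Poly_Mapping.single (mono' j) (rs w B j))"
      by (rule sum.mono_neutral_right) (use sub in \<open>auto simp: rs_def\<close>)
    also have "\<dots> = (\<Sum>j\<in>B. Poly_Mapping.single (mono' j) (w j))"
      by (rule sum.cong) (auto simp: rs_def)
    finally show "(\<Sum>j\<in>U - E. Poly_Mapping.single (mono' j) (rs w B j)) = (\<Sum>j\<in>B. Poly_Mapping.single (mono' j) (w j))" .
  qed simp
  also have "\<dots> = (\<Sum>k\<in>{1..t}. \<Sum>j\<in>bl k. Poly_Mapping.single (mono' j) (w j))"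
    by (rule sum.reindex_bij_betw[OF bl_bij, symmetric])
  also have "\<dots> \<in> IW"
  proof (rule ideal_sum[OF IW_ideal])
    fix k assume k: "k \<in> {1..t}"
    define B where "B = bl k"
    have B: "B \<in> Bs" unfolding B_def by (rule bl_Bs[OF k])
    define w' where "w' = vec (card B) (\<lambda>p. w (\<beta> B p))"
    have "ext B w' = rs w B"
    proof
      fix i show "ext B w' i = rs w B i"
        by (cases "i \<in> B") (auto simp: ext_def rs_def w'_def pos_props[OF B])
    qed
    then have "ext B w' \<in> Kp" using Bs_split[OF B] wKp unfolding split_def by simp
    then have w'k: "w' \<in> mat_kernel (As k)" using MB_kernel[OF B] by (simp add: As_def B_def w'_def)
    have "(\<Sum>j\<in>bl k. Poly_Mapping.single (mono' j) (w j)) =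
        (\<Sum>p<card B. (\<lambda>j. Poly_Mapping.single (mono' j) (w j)) (\<beta> B p))"
      unfolding B_def by (rule sum.reindex_bij_betw[OF \<beta>_bij[OF bl_Bs[OF k]], symmetric])
    also have "\<dots> = (\<Sum>p<card B. Poly_Mapping.single (mono_T (Pair k) (nss k) (ls k) p) (w' $ p))"
      by (rule sum.cong) (auto simp: mono'_beta[OF k] w'_def B_def)
    also have "\<dots> = g_poly (Pair k) (As k) (nss k) (ls k) w'"
      unfolding g_poly_Pair[OF k] B_def ..
    finally show "(\<Sum>j\<in>bl k. Poly_Mapping.single (mono' j) (w j)) \<in> IW"
      using GW_IW[OF k w'k] by simp
  qed
  finally show ?thesis .
qed

theorem main_dat:
  "\<exists>(t::nat) (As :: nat \<Rightarrow> complex mat) (nss :: nat \<Rightarrow> nat \<Rightarrow> nat)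
            (ls :: nat \<Rightarrow> nat \<Rightarrow> nat \<Rightarrow> nat) (ms :: nat \<Rightarrow> nat) (m' :: nat).
           (\<forall>i\<in>{1..t}. valid_data (As i) (nss i) (ls i) (ms i)
                        \<and> indecomposable_data (As i) (nss i) (ls i) \<and> ms i = 0)
         \<and> m' \<ge> m
         \<and> calg_iso_quot (R_ring A ns l m) (tensor_ring t As nss ls ms m')"
proof (intro exI conjI)
  show "\<forall>i\<in>{1..t}. valid_data (As i) (nss i) (ls i) (ms i) \<and> indecomposable_data (As i) (nss i) (ls i) \<and> ms i = 0"
    using block_valid block_indec bl_Bs by (simp add: As_def nss_def ls_def ms_def)
  show "m' \<ge> m" by (rule m_le)
  show "calg_iso_quot (R_ring A ns l m) (tensor_ring t As nss ls ms m')"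
    unfolding R_ring_def tensor_ring_def V_def[symmetric] W_def[symmetric]
    by (rule quot_iso[OF \<sigma>_carrier \<tau>_carrier GV_carrier GW_carrier cond_a cond_b cond_c cond_d])
qed

end

theorem proposition3p2:
  fixes A :: "complex mat" and ns :: "nat \<Rightarrow> nat" and l :: "nat \<Rightarrow> nat \<Rightarrow> nat" and m :: nat
  assumes "valid_data A ns l m"
  shows "\<exists>(t::nat) (As :: nat \<Rightarrow> complex mat) (nss :: nat \<Rightarrow> nat \<Rightarrow> nat)
            (ls :: nat \<Rightarrow> nat \<Rightarrow> nat \<Rightarrow> nat) (ms :: nat \<Rightarrow> nat) (m' :: nat).
           (\<forall>i\<in>{1..t}. valid_data (As i) (nss i) (ls i) (ms i)
                        \<and> indecomposable_data (As i) (nss i) (ls i) \<and> ms i = 0)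
         \<and> m' \<ge> m
         \<and> calg_iso_quot (R_ring A ns l m) (tensor_ring t As nss ls ms m')"
  by (rule dat.main_dat[OF dat.intro[OF assms]])


end
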